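(* Fix positive integers $\beta,p$. There is an algorithm which, given $n$ and an integer $m\in\{1,\ldots,M_n\}$ where $M_n=|\mathcal{S}_n(\beta,p)|$, outputs the vector $\mathbf{c}\in\mathcal{S}_n(\beta,p)$ with $ord(\mathbf{c})=m$; its time complexity and space complexity are both $O(n)$.
   Context: A binary vector is $(\beta,p)$-window-weight-limited (WWL) if every $\beta$ consecutive entries contain at most $p$ ones; $\mathcal{S}_n(\beta,p)$ is the set of $(\beta,p)$-WWL vectors of length $n$. For $\mathbf{x}=(x_1,\ldots,x_n)\in\{0,1\}^n$ let $\psi(\mathbf{x})=\sum_{k=1}^n x_k2^{n-k}$ (so $x_1$ is the most significant bit), and write $\mathbf{x}\preceq\mathbf{y}$ iff $\psi(\mathbf{x})\le\psi(\mathbf{y})$. For a set $X$ of distinct binary vectors of length $n$ and $\mathbf{x}\in X$, $ord(\mathbf{x})=|\{\mathbf{y}\in X:\mathbf{y}\preceq\mathbf{x}\}|$. Complexity is measured with $\beta,p$ fixed, counting arithmetic operations and storage of integers at unit cost. *)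

theory Defs
  imports Main
begin

text \<open>Binary vectors of length n are lists of booleans; xs!0 is x_1 (most significant bit).\<close>

definition wwl :: "nat \<Rightarrow> nat \<Rightarrow> bool list \<Rightarrow> bool" where
  "wwl \<beta> p xs \<longleftrightarrow> (\<forall>i<length xs. length (filter id (take \<beta> (drop i xs))) \<le> p)"

definition WWL :: "nat \<Rightarrow> nat \<Rightarrow> nat \<Rightarrow> bool list set" where
  "WWL n \<beta> p = {xs. length xs = n \<and> wwl \<beta> p xs}"

definition psi :: "bool list \<Rightarrow> nat" where
  "psi xs = (\<Sum>k<length xs. (if xs ! k then 2 ^ (length xs - 1 - k) else 0))"

definition ord_in :: "bool list set \<Rightarrow> bool list \<Rightarrow> nat" where
  "ord_in X x = card {y \<in> X. psi y \<le> psi x}"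

text \<open>Memory cells are indexed by nat and hold unbounded integers (unit cost).
  Each instruction is one arithmetic/memory/control operation.\<close>

datatype instr =
    LoadC nat int
  | Add nat nat nat
  | Sub nat nat nat
  | Mul nat nat nat
  | LoadI nat nat
  | StoreI nat nat
  | JumpPos nat nat
  | Jump nat
  | Halt

type_synonym conf = "nat \<times> (nat \<Rightarrow> int)"

fun exec :: "instr \<Rightarrow> conf \<Rightarrow> conf" where
  "exec (LoadC a c) (pc, m) = (Suc pc, m(a := c))"
| "exec (Add a b c) (pc, m) = (Suc pc, m(a := m b + m c))"
| "exec (Sub a b c) (pc, m) = (Suc pc, m(a := m b - m c))"
| "exec (Mul a b c) (pc, m) = (Suc pc, m(a := m b * m c))"
| "exec (LoadI a b) (pc, m) = (Suc pc, m(a := m (nat (m b))))"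
| "exec (StoreI a b) (pc, m) = (Suc pc, m(nat (m a) := m b))"
| "exec (JumpPos a l) (pc, m) = (if m a > 0 then l else Suc pc, m)"
| "exec (Jump l) (pc, m) = (l, m)"
| "exec Halt (pc, m) = (pc, m)"

fun touched :: "instr \<Rightarrow> (nat \<Rightarrow> int) \<Rightarrow> nat set" where
  "touched (LoadC a c) m = {a}"
| "touched (Add a b c) m = {a, b, c}"
| "touched (Sub a b c) m = {a, b, c}"
| "touched (Mul a b c) m = {a, b, c}"
| "touched (LoadI a b) m = {a, b, nat (m b)}"
| "touched (StoreI a b) m = {a, b, nat (m a)}"
| "touched (JumpPos a l) m = {a}"
| "touched (Jump l) m = {}"
| "touched Halt m = {}"

definition halted :: "instr list \<Rightarrow> conf \<Rightarrow> bool" where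
  "halted prog c \<longleftrightarrow> fst c \<ge> length prog \<or> prog ! fst c = Halt"

definition step :: "instr list \<Rightarrow> conf \<Rightarrow> conf" where
  "step prog c = (if halted prog c then c else exec (prog ! fst c) c)"

definition run :: "instr list \<Rightarrow> conf \<Rightarrow> nat \<Rightarrow> conf" where
  "run prog c t = (step prog ^^ t) c"

definition used_cells :: "instr list \<Rightarrow> conf \<Rightarrow> nat \<Rightarrow> nat set" where
  "used_cells prog c t =
     (\<Union>i<t. (let ci = run prog c i in
               if halted prog ci then {} else touched (prog ! fst ci) (snd ci)))"

definition init :: "nat \<Rightarrow> nat \<Rightarrow> conf" where
  "init n m = (0, (\<lambda>_. 0)(0 := int n, 1 := int m))"

end

theory Submission
  imports Defs
begin


definition ones :: "bool list \<Rightarrow> nat" where "ones xs = length (filter id xs)"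
definition lastk :: "nat \<Rightarrow> bool list \<Rightarrow> bool list" where "lastk k xs = drop (length xs - k) xs"

fun pop :: "nat \<Rightarrow> nat \<Rightarrow> nat" where
  "pop x 0 = 0"
| "pop x (Suc k) = x mod 2 + pop (x div 2) k"

fun lexle :: "bool list \<Rightarrow> bool list \<Rightarrow> bool" where
  "lexle [] [] = True"
| "lexle (a#w) (b#v) = ((\<not>a \<and> b) \<or> (a = b \<and> lexle w v))"
| "lexle _ _ = False"

lemma psi_Cons: "psi (b # w) = (if b then 2 ^ length w else 0) + psi w"
proof -
  have e: "\<And>n i. Suc n - 1 - Suc i = n - 1 - i" by simp
  show ?thesis unfolding psi_def length_Cons sum.lessThan_Suc_shift e by simp
qed

lemma psi_lt: "psi w < 2 ^ length w"
proof (induction w)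
  case Nil then show ?case by (simp add: psi_def)
next
  case (Cons a w) then show ?case by (simp add: psi_Cons)
qed

lemma psi_snoc: "psi (w @ [b]) = 2 * psi w + (if b then 1 else 0)"
proof (induction w)
  case Nil then show ?case by (simp add: psi_def)
next
  case (Cons a w) then show ?case by (simp add: psi_Cons)
qed

lemma psi_le_lexle: "length y = length x \<Longrightarrow> (psi y \<le> psi x) = lexle y x"
proof (induction y arbitrary: x)
  case Nil then show ?case by (simp add: psi_def)
next
  case (Cons a y)
  then obtain b x' where x: "x = b # x'" "length y = length x'" by (cases x) auto
  have l: "psi y < 2 ^ length y" "psi x' < 2 ^ length y" using psi_lt x(2) by (metis)+
  have ih: "(psi y \<le> psi x') = lexle y x'" using Cons.IH[OF x(2)] .
  show ?case
  proof (cases a; cases b)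
    assume "a" "b" then show ?thesis using ih x by (simp add: psi_Cons)
  next
    assume "\<not>a" "\<not>b" then show ?thesis using ih x by (simp add: psi_Cons)
  next
    assume "a" "\<not>b" then show ?thesis using l x by (simp add: psi_Cons)
  next
    assume "\<not>a" "b" then show ?thesis using l x by (simp add: psi_Cons)
  qed
qed

lemma pop_0: "pop 0 k = 0" by (induction k) auto

lemma pop_mod: "pop (x mod 2 ^ k) k = pop x k"
proof (induction k arbitrary: x)
  case 0 then show ?case by simp
next
  case (Suc k)
  have "x mod 2 ^ Suc k mod 2 = x mod 2" by (simp add: mod_mod_cancel)
  moreover have "x mod 2 ^ Suc k div 2 = x div 2 mod 2 ^ k"
    by (simp add: mod_mult2_eq)
  ultimately show ?case using Suc by simp
qed

lemma ones_lastk_pop: "ones (lastk k h) = pop (psi h) k"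
proof (induction h arbitrary: k rule: rev_induct)
  case Nil then show ?case by (simp add: lastk_def ones_def pop_0 psi_def)
next
  case (snoc b h)
  show ?case
  proof (cases k)
    case 0 then show ?thesis by (simp add: lastk_def ones_def)
  next
    case (Suc k')
    have "lastk (Suc k') (h @ [b]) = lastk k' h @ [b]" by (simp add: lastk_def)
    then show ?thesis using snoc[of k'] Suc by (simp add: psi_snoc ones_def)
  qed
qed

lemma ones_append: "ones (a @ b) = ones a + ones b" by (simp add: ones_def)

lemma ones_take_le: "ones (take k xs) \<le> ones xs"
  by (metis append_take_drop_id le_add1 ones_append)

lemma ones_drop_mono: "ones (drop i xs) \<le> ones (drop j xs)" if "j \<le> i"
proof -
  have "drop j xs = take (i - j) (drop j xs) @ drop i xs"
    using that by (metis append_take_drop_id drop_drop le_add_diff_inverse2)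
  then show ?thesis by (metis le_add2 ones_append)
qed


lemma wwl_alt: "wwl b p ys = (\<forall>i<length ys. ones (take b (drop i ys)) \<le> p)"
  by (simp add: wwl_def ones_def)

lemma ones_take_append_le: "ones (take k u) \<le> ones (take k (u @ v))"
  by (simp add: ones_append)

lemma wwl_prefix: "wwl b p (xs @ ys) \<Longrightarrow> wwl b p xs"
  unfolding wwl_alt
proof (intro allI impI)
  fix i assume A: "\<forall>i<length (xs @ ys). ones (take b (drop i (xs @ ys))) \<le> p" and i: "i < length xs"
  have e: "drop i (xs @ ys) = drop i xs @ ys" using i by simp
  have A': "ones (take b (drop i xs @ ys)) \<le> p" using A i e by (metis length_append trans_less_add1)
  show "ones (take b (drop i xs)) \<le> p" using ones_take_append_le[of b "drop i xs" ys] A' by linarith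
qed

lemma wwl_snoc:
  assumes "b > 0"
  shows "wwl b p (xs @ [c]) = (wwl b p xs \<and> ones (lastk b (xs @ [c])) \<le> p)"
proof
  assume A: "wwl b p (xs @ [c])"
  then have "wwl b p xs" by (rule wwl_prefix)
  moreover
  define j where "j = length xs + 1 - b"
  have j: "j < length (xs @ [c])" using assms by (simp add: j_def)
  have "take b (drop j (xs @ [c])) = lastk b (xs @ [c])"
    by (simp add: lastk_def j_def)
  then have "ones (lastk b (xs @ [c])) \<le> p" using A j unfolding wwl_alt by metis
  ultimately show "wwl b p xs \<and> ones (lastk b (xs @ [c])) \<le> p" by simp
next
  assume A: "wwl b p xs \<and> ones (lastk b (xs @ [c])) \<le> p"
  show "wwl b p (xs @ [c])" unfolding wwl_alt
  proof (intro allI impI)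
    fix i assume i: "i < length (xs @ [c])"
    show "ones (take b (drop i (xs @ [c]))) \<le> p"
    proof (cases "i + b \<le> length xs")
      case True
      then have "take b (drop i (xs @ [c])) = take b (drop i xs)" by simp
      moreover have "i < length xs" using True assms by simp
      ultimately show ?thesis using A unfolding wwl_alt by simp
    next
      case False
      then have "take b (drop i (xs @ [c])) = drop i (xs @ [c])" by simp
      moreover have "ones (drop i (xs @ [c])) \<le> ones (drop (length (xs @ [c]) - b) (xs @ [c]))"
        using False by (intro ones_drop_mono) simp
      ultimately show ?thesis using A by (simp add: lastk_def)
    qed
  qed
qed

lemma lastk_snoc: "lastk (Suc k) (xs @ [c]) = lastk k xs @ [c]"
  by (simp add: lastk_def)

locale wl =
  fixes \<beta> p :: nat
  assumes bpos: "\<beta> > 0"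
begin

definition Q :: nat where "Q = 2 ^ (\<beta> - 1)"
definition S :: "bool list \<Rightarrow> nat \<Rightarrow> bool list set" where
  "S h L = {w. length w = L \<and> wwl \<beta> p (h @ w)}"
definition st :: "bool list \<Rightarrow> nat" where "st h = psi h mod Q"
definition z0 :: "nat \<Rightarrow> nat" where "z0 s = 2 * s mod Q"
definition z1 :: "nat \<Rightarrow> nat" where
  "z1 s = (if pop s (\<beta> - 1) < p then (2 * s + 1) mod Q else Q)"

fun val :: "nat \<Rightarrow> nat \<Rightarrow> nat" where
  "val 0 s = (if s < Q then 1 else 0)"
| "val (Suc L) s = (if s < Q then val L (z0 s) + val L (z1 s) else 0)"

fun decs :: "nat \<Rightarrow> nat \<Rightarrow> nat \<Rightarrow> bool list" where
  "decs s 0 m = []"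
| "decs s (Suc L) m = (if m \<le> val L (z0 s) then False # decs (z0 s) L m
                       else True # decs (z1 s) L (m - val L (z0 s)))"

lemma Q_pos: "Q > 0" by (simp add: Q_def)
lemma st_lt: "st h < Q" using Q_pos by (simp add: st_def)
lemma z0_lt: "z0 s < Q" using Q_pos by (simp add: z0_def)
lemma val_Q: "val L Q = 0" by (cases L) auto
lemma st_Nil: "st [] = 0" by (simp add: st_def psi_def)

lemma st_snoc: "st (h @ [c]) = (2 * st h + (if c then 1 else 0)) mod Q"
proof -
  have "(2 * x + y) mod Q = (2 * (x mod Q) + y) mod Q" for x y :: nat
    by (metis mod_add_left_eq mod_mult_right_eq)
  then show ?thesis by (simp add: st_def psi_snoc)
qed

lemma wwl_F: "wwl \<beta> p h \<Longrightarrow> wwl \<beta> p (h @ [False])"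
proof -
  assume h: "wwl \<beta> p h"
  obtain k where k: "\<beta> = Suc k" using bpos by (cases \<beta>) auto
  have "ones (lastk k h) \<le> p"
  proof (cases "h = []")
    case True then show ?thesis by (simp add: lastk_def ones_def)
  next
    case False
    define i0 where "i0 = length h - \<beta>"
    have i0: "i0 < length h" using False bpos by (simp add: i0_def)
    have "take \<beta> (drop i0 h) = drop i0 h" by (simp add: i0_def)
    then have "ones (drop i0 h) \<le> p" using h i0 unfolding wwl_alt by metis
    moreover have "ones (lastk k h) \<le> ones (drop i0 h)"
      unfolding lastk_def by (intro ones_drop_mono) (simp add: i0_def k)
    ultimately show ?thesis by simp
  qed
  then show ?thesis using h bpos by (simp add: wwl_snoc k lastk_snoc ones_append ones_def)
qed

lemma wwl_T: "wwl \<beta> p h \<Longrightarrow> wwl \<beta> p (h @ [True]) = (pop (st h) (\<beta> - 1) < p)"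
proof -
  assume h: "wwl \<beta> p h"
  obtain k where k: "\<beta> = Suc k" using bpos by (cases \<beta>) auto
  have "pop (st h) (\<beta> - 1) = pop (psi h) (\<beta> - 1)"
    by (simp add: st_def Q_def pop_mod)
  then have "pop (st h) (\<beta> - 1) = ones (lastk k h)"
    by (simp add: ones_lastk_pop k)
  then show ?thesis using h bpos by (simp add: wwl_snoc k lastk_snoc ones_append ones_def Suc_le_eq)
qed

lemma S_empty: "\<not> wwl \<beta> p h \<Longrightarrow> S h L = {}"
  by (auto simp: S_def dest: wwl_prefix)

lemma S_finite: "finite (S h L)"
proof -
  have "S h L \<subseteq> {w. set w \<subseteq> UNIV \<and> length w = L}" by (auto simp: S_def)
  then show ?thesis using finite_lists_length_eq[of "UNIV :: bool set" L] finite_subset by auto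
qed

lemma S_Suc: "S h (Suc L) = Cons False ` S (h @ [False]) L \<union> Cons True ` S (h @ [True]) L"
proof
  show "S h (Suc L) \<subseteq> Cons False ` S (h @ [False]) L \<union> Cons True ` S (h @ [True]) L"
  proof
    fix w assume "w \<in> S h (Suc L)"
    then obtain c w' where w: "w = c # w'" "length w' = L" "wwl \<beta> p ((h @ [c]) @ w')"
      by (cases w) (auto simp: S_def)
    then show "w \<in> Cons False ` S (h @ [False]) L \<union> Cons True ` S (h @ [True]) L"
      by (cases c) (auto simp: S_def)
  qed
  show "Cons False ` S (h @ [False]) L \<union> Cons True ` S (h @ [True]) L \<subseteq> S h (Suc L)"
    by (auto simp: S_def)
qed

lemma card_S_Suc: "card (S h (Suc L)) = card (S (h @ [False]) L) + card (S (h @ [True]) L)"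
  unfolding S_Suc
  by (subst card_Un_disjoint) (auto simp: S_finite card_image)

lemma card_S: "wwl \<beta> p h \<Longrightarrow> card (S h L) = val L (st h)"
proof (induction L arbitrary: h)
  case 0
  then have "S h 0 = {[]}" by (auto simp: S_def)
  then show ?case using st_lt by simp
next
  case (Suc L)
  have F: "card (S (h @ [False]) L) = val L (z0 (st h))"
    using Suc.IH[OF wwl_F[OF Suc.prems]] by (simp add: st_snoc z0_def)
  have T: "card (S (h @ [True]) L) = val L (z1 (st h))"
  proof (cases "wwl \<beta> p (h @ [True])")
    case True
    then show ?thesis using Suc.IH[OF True] wwl_T[OF Suc.prems] by (simp add: st_snoc z1_def)
  next
    case False
    then show ?thesis using wwl_T[OF Suc.prems] by (simp add: S_empty z1_def val_Q)
  qed
  show ?case using F T st_lt[of h] by (simp add: card_S_Suc)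
qed

lemma decs_correct:
  "wwl \<beta> p h \<Longrightarrow> 1 \<le> m \<Longrightarrow> m \<le> card (S h L) \<Longrightarrow>
   decs (st h) L m \<in> S h L \<and> card {w \<in> S h L. lexle w (decs (st h) L m)} = m"
proof (induction L arbitrary: h m)
  case 0
  then have "S h 0 = {[]}" by (auto simp: S_def)
  moreover have "{w \<in> {[]}. lexle w []} = {[]}" by auto
  ultimately show ?case using 0 by simp
next
  case (Suc L)
  have hF: "wwl \<beta> p (h @ [False])" using wwl_F[OF Suc.prems(1)] .
  have cF: "card (S (h @ [False]) L) = val L (z0 (st h))"
    using card_S[OF hF] by (simp add: st_snoc z0_def)
  have stF: "st (h @ [False]) = z0 (st h)" by (simp add: st_snoc z0_def)
  have mle: "m \<le> card (S (h @ [False]) L) + card (S (h @ [True]) L)"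
    using Suc.prems(3) card_S_Suc by simp
  show ?case
  proof (cases "m \<le> val L (z0 (st h))")
    case True
    note IH = Suc.IH[OF hF Suc.prems(2), unfolded stF, OF True[folded cF]]
    define d where "d = decs (z0 (st h)) L m"
    have dec: "decs (st h) (Suc L) m = False # d" using True by (simp add: d_def)
    have "{w \<in> S h (Suc L). lexle w (False # d)} = Cons False ` {w \<in> S (h @ [False]) L. lexle w d}"
      unfolding S_Suc by auto
    then have "card {w \<in> S h (Suc L). lexle w (False # d)} = m"
      using IH by (simp add: card_image d_def)
    then show ?thesis using IH dec unfolding S_Suc by (simp add: d_def)
  next
    case False
    then have pos: "card (S (h @ [True]) L) > 0" using mle cF by simp
    then have hT: "wwl \<beta> p (h @ [True])" using S_empty by fastforce
    have stT: "st (h @ [True]) = z1 (st h)" using wwl_T[OF Suc.prems(1)] hT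
      by (simp add: st_snoc z1_def)
    have m1: "1 \<le> m - val L (z0 (st h))" "m - val L (z0 (st h)) \<le> card (S (h @ [True]) L)"
      using False mle cF by auto
    note IH = Suc.IH[OF hT m1[unfolded stT[symmetric]], unfolded stT]
    define d where "d = decs (z1 (st h)) L (m - val L (z0 (st h)))"
    have dec: "decs (st h) (Suc L) m = True # d" using False by (simp add: d_def)
    have eqU: "{w \<in> S h (Suc L). lexle w (True # d)} =
          Cons False ` S (h @ [False]) L \<union> Cons True ` {w \<in> S (h @ [True]) L. lexle w d}"
      unfolding S_Suc by (auto simp: S_def)
    have "card {w \<in> S h (Suc L). lexle w (True # d)} =
          card (S (h @ [False]) L) + card {w \<in> S (h @ [True]) L. lexle w d}"
    proof -
      have f: "finite {w \<in> S (h @ [True]) L. lexle w d}" using S_finite by simp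
      show ?thesis unfolding eqU
        by (subst card_Un_disjoint) (auto simp: S_finite f card_image)
    qed
    then have "card {w \<in> S h (Suc L). lexle w (True # d)} = m"
      using IH False cF by (simp add: d_def)
    then show ?thesis using IH dec unfolding S_Suc by (simp add: d_def)
  qed
qed

lemma S_Nil: "S [] n = WWL n \<beta> p" by (simp add: S_def WWL_def)

lemma main_comb:
  assumes "1 \<le> m" "m \<le> card (WWL n \<beta> p)"
  shows "decs 0 n m \<in> WWL n \<beta> p \<and> ord_in (WWL n \<beta> p) (decs 0 n m) = m"
proof -
  have w0: "wwl \<beta> p []" by (simp add: wwl_def)
  note D = decs_correct[OF w0 assms(1), of n, unfolded st_Nil S_Nil, OF assms(2)]
  have "{y \<in> WWL n \<beta> p. psi y \<le> psi (decs 0 n m)} = {y \<in> WWL n \<beta> p. lexle y (decs 0 n m)}"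
    using D psi_le_lexle by (auto simp: WWL_def)
  then show ?thesis using D by (simp add: ord_in_def)
qed

end



lemma run_0[simp]: "run prog c 0 = c" by (simp add: run_def)
lemma run_Suc: "run prog c (Suc t) = run prog (step prog c) t"
  by (simp only: run_def funpow_Suc_right o_apply)
lemma run_add: "run prog c (a + b) = run prog (run prog c a) b"
  by (simp only: run_def add.commute[of a b] funpow_add o_apply)
lemma run_halted: "halted prog c \<Longrightarrow> run prog c t = c"
  by (induction t) (auto simp: run_def step_def)

lemma run_step:
  "pc < length prog \<Longrightarrow> prog ! pc \<noteq> Halt \<Longrightarrow>
   run prog (pc, m) (Suc t) = run prog (exec (prog ! pc) (pc, m)) t"
  by (simp add: run_Suc step_def halted_def)

lemma run_step_num:
  "pc < length prog \<Longrightarrow> prog ! pc \<noteq> Halt \<Longrightarrow>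
   run prog (pc, m) (numeral k) = run prog (exec (prog ! pc) (pc, m)) (pred_numeral k)"
  by (simp add: numeral_eq_Suc run_step)

lemma card_touched: "card (touched i m) \<le> 3"
  by (cases i) (auto simp: card_insert_if)

lemma card_used: "card (used_cells prog c t) \<le> 3 * t"
proof -
  have "card (used_cells prog c t) \<le> (\<Sum>i<t. card (let ci = run prog c i in
               if halted prog ci then {} else touched (prog ! fst ci) (snd ci)))"
    unfolding used_cells_def by (rule card_UN_le) simp
  also have "\<dots> \<le> (\<Sum>i<t. 3)"
    by (intro sum_mono) (simp add: Let_def card_touched)
  finally show ?thesis by simp
qed

context wl begin

definition main :: "instr list" where
  "main = [LoadC 2 1,
    LoadC 11 (int Q + 1),
    LoadC 4 20,
    Add 13 0 4,
    LoadC 4 19,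
    Add 12 13 4,
    Add 6 12 3,
    Jump 110,
    Add 7 6 3,
    Add 9 6 3,
    LoadC 8 (int Q),
    StoreI 7 2,
    Add 7 7 2,
    Sub 8 8 2,
    JumpPos 8 11,
    Add 7 7 2,
    Add 10 0 3,
    JumpPos 10 19,
    Jump 38,
    LoadC 8 (int Q),
    Add 6 12 3,
    LoadI 4 6,
    Add 4 9 4,
    LoadI 4 4,
    Add 6 6 2,
    LoadI 5 6,
    Add 5 9 5,
    LoadI 5 5,
    Add 6 6 2,
    Add 4 4 5,
    StoreI 7 4,
    Add 7 7 2,
    Sub 8 8 2,
    JumpPos 8 21,
    Add 9 9 11,
    Add 7 7 2,
    Sub 10 10 2,
    JumpPos 10 19,
    Sub 9 9 11,
    LoadC 15 19,
    Add 7 3 2,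
    Sub 19 13 2,
    Add 10 0 3,
    JumpPos 10 45,
    Jump 69,
    Add 6 12 14,
    Add 6 6 14,
    LoadI 4 6,
    Add 4 9 4,
    LoadI 4 4,
    Sub 16 1 4,
    JumpPos 16 55,
    LoadI 14 6,
    LoadC 17 0,
    Jump 59,
    Add 1 16 3,
    Add 6 6 2,
    LoadI 14 6,
    LoadC 17 1,
    Add 18 7 3,
    JumpPos 15 62,
    Jump 63,
    Add 18 18 19,
    StoreI 18 17,
    Add 7 7 2,
    Sub 15 15 2,
    Sub 9 9 11,
    Sub 10 10 2,
    JumpPos 10 45,
    Add 0 13 3,
    LoadC 4 18,
    Add 1 13 4,
    LoadC 2 1,
    LoadI 19 1,
    Sub 1 1 2,
    LoadI 18 1,
    Sub 1 1 2,
    LoadI 17 1,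
    Sub 1 1 2,
    LoadI 16 1,
    Sub 1 1 2,
    LoadI 15 1,
    Sub 1 1 2,
    LoadI 14 1,
    Sub 1 1 2,
    LoadI 13 1,
    Sub 1 1 2,
    LoadI 12 1,
    Sub 1 1 2,
    LoadI 11 1,
    Sub 1 1 2,
    LoadI 10 1,
    Sub 1 1 2,
    LoadI 9 1,
    Sub 1 1 2,
    LoadI 8 1,
    Sub 1 1 2,
    LoadI 7 1,
    Sub 1 1 2,
    LoadI 6 1,
    Sub 1 1 2,
    LoadI 5 1,
    Sub 1 1 2,
    LoadI 4 1,
    Sub 1 1 2,
    LoadI 3 1,
    Sub 1 1 2,
    LoadI 2 1,
    LoadI 1 0,
    Halt]"

definition blk :: "nat \<Rightarrow> instr list" where
  "blk s = [LoadC 4 (int (z0 s)), StoreI 6 4, Add 6 6 2, LoadC 4 (int (z1 s)), StoreI 6 4, Add 6 6 2]"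

definition initc :: "instr list" where "initc = concat (map blk [0..<Q])"

definition prog :: "instr list" where "prog = main @ initc @ [Jump 8]"

lemma len_main: "length main = 110" by (simp add: main_def)

lemma fetch: "i < 110 \<Longrightarrow> prog ! i = main ! i"
  by (simp add: prog_def nth_append len_main)

lemma len_prog: "length prog = 111 + 6 * Q"
proof -
  have "length initc = 6 * Q" unfolding initc_def
  proof -
    have "length \<circ> blk = (\<lambda>_. 6)" by (simp add: fun_eq_iff blk_def)
    then show "length (concat (map blk [0..<Q])) = 6 * Q" by (simp add: length_concat sum_list_triv)
  qed
  then show ?thesis by (simp add: prog_def len_main)
qed

lemma nat_int_p1[simp]: "nat (int x + 1) = x + 1" by simp
lemma int_p1: "int x + 1 = int (x + 1)" by simp

lemma nth_concat6:
  assumes "\<forall>x\<in>set xs. length (f x) = 6" "j < length xs" "i < 6"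
  shows "concat (map f xs) ! (6 * j + i) = f (xs ! j) ! i"
  using assms
proof (induction xs arbitrary: j)
  case Nil then show ?case by simp
next
  case (Cons x xs)
  show ?case
  proof (cases j)
    case 0 then show ?thesis using Cons.prems by (simp add: nth_append)
  next
    case (Suc j')
    then have "concat (map f (x # xs)) ! (6 * j + i) = concat (map f xs) ! (6 * j' + i)"
      using Cons.prems by (simp add: nth_append)
    then show ?thesis using Cons Suc by simp
  qed
qed

lemma fetch_init0: "j < Q \<Longrightarrow> i < 6 \<Longrightarrow> prog ! (110 + (6 * j + i)) = blk j ! i"
proof -
  assume a: "j < Q" "i < 6"
  have l: "length initc = 6 * Q" using len_prog by (simp add: prog_def len_main)
  have "6 * j + i < 6 * Q" using a by linarith
  then have "prog ! (110 + (6 * j + i)) = initc ! (6 * j + i)"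
    using l by (simp add: prog_def nth_append len_main)
  also have "\<dots> = blk j ! i" unfolding initc_def using a
    by (subst nth_concat6) (auto simp: blk_def)
  finally show ?thesis .
qed

lemma fetch_init:
  assumes "j < Q"
  shows "prog ! (110 + 6 * j) = LoadC 4 (int (z0 j))"
    "prog ! (111 + 6 * j) = StoreI 6 4"
    "prog ! (112 + 6 * j) = Add 6 6 2"
    "prog ! (113 + 6 * j) = LoadC 4 (int (z1 j))"
    "prog ! (114 + 6 * j) = StoreI 6 4"
    "prog ! (115 + 6 * j) = Add 6 6 2"
  using fetch_init0[OF assms, of 0] fetch_init0[OF assms, of 1] fetch_init0[OF assms, of 2]
    fetch_init0[OF assms, of 3] fetch_init0[OF assms, of 4] fetch_init0[OF assms, of 5]
  by (simp_all add: blk_def add.assoc[symmetric])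

lemma fetch_init_end: "prog ! (110 + 6 * Q) = Jump 8"
proof -
  have l: "length initc = 6 * Q" using len_prog by (simp add: prog_def len_main)
  then show ?thesis by (simp add: prog_def nth_append len_main)
qed

lemma init_blk:
  assumes "j < Q" "m 2 = 1" "m 6 = int (n + 39 + 2 * j)"
  shows "\<exists>m'. run prog (110 + 6 * j, m) 6 = (116 + 6 * j, m') \<and> m' 2 = 1 \<and>
     m' 6 = int (n + 39 + 2 * (j + 1)) \<and> m' (n + 39 + 2 * j) = int (z0 j) \<and>
     m' (n + 39 + 2 * j + 1) = int (z1 j) \<and>
     (\<forall>a. a \<noteq> 4 \<and> a \<noteq> 6 \<and> a \<noteq> n + 39 + 2 * j \<and> a \<noteq> n + 39 + 2 * j + 1 \<longrightarrow> m' a = m a)"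
  using assms by (simp add: run_step_num run_step len_prog fetch_init del: of_nat_add of_nat_mult)

lemma init_loop:
  assumes "j \<le> Q" "m 2 = 1" "m 6 = int (n + 39 + 2 * j)"
  shows "\<exists>m'. run prog (110 + 6 * j, m) (6 * (Q - j)) = (110 + 6 * Q, m') \<and> m' 2 = 1 \<and>
     m' 6 = int (n + 39 + 2 * Q) \<and>
     (\<forall>s. j \<le> s \<and> s < Q \<longrightarrow> m' (n + 39 + 2 * s) = int (z0 s) \<and> m' (n + 39 + 2 * s + 1) = int (z1 s)) \<and>
     (\<forall>a. a \<noteq> 4 \<and> a \<noteq> 6 \<and> \<not> (n + 39 + 2 * j \<le> a \<and> a < n + 39 + 2 * Q) \<longrightarrow> m' a = m a)"
  using assms
proof (induction "Q - j" arbitrary: j m)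
  case 0
  then have "j = Q" by simp
  then show ?case using 0 by auto
next
  case (Suc d)
  then have jQ: "j < Q" by simp
  obtain m1 where m1: "run prog (110 + 6 * j, m) 6 = (116 + 6 * j, m1)" "m1 2 = 1"
     "m1 6 = int (n + 39 + 2 * (j + 1))" "m1 (n + 39 + 2 * j) = int (z0 j)"
     "m1 (n + 39 + 2 * j + 1) = int (z1 j)"
     "\<forall>a. a \<noteq> 4 \<and> a \<noteq> 6 \<and> a \<noteq> n + 39 + 2 * j \<and> a \<noteq> n + 39 + 2 * j + 1 \<longrightarrow> m1 a = m a"
    using init_blk[OF jQ Suc.prems(2,3)] by blast
  have d: "d = Q - (j + 1)" using Suc.hyps by simp
  have jQ1: "j + 1 \<le> Q" using jQ by simp
  from Suc.hyps(1)[OF d jQ1 m1(2) m1(3)]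
  obtain m' where m': "run prog (110 + 6 * (j + 1), m1) (6 * (Q - (j + 1))) = (110 + 6 * Q, m')" "m' 2 = 1"
     "m' 6 = int (n + 39 + 2 * Q)"
     "\<forall>s. j + 1 \<le> s \<and> s < Q \<longrightarrow> m' (n + 39 + 2 * s) = int (z0 s) \<and> m' (n + 39 + 2 * s + 1) = int (z1 s)"
     "\<forall>a. a \<noteq> 4 \<and> a \<noteq> 6 \<and> \<not> (n + 39 + 2 * (j + 1) \<le> a \<and> a < n + 39 + 2 * Q) \<longrightarrow> m' a = m1 a"
    by blast
  have t: "6 * (Q - j) = 6 + 6 * (Q - (j + 1))" using jQ by simp
  have r: "run prog (110 + 6 * j, m) (6 * (Q - j)) = (110 + 6 * Q, m')"
    unfolding t run_add m1(1) using m'(1) by simp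
  show ?case
  proof (intro exI conjI allI impI)
    show "run prog (110 + 6 * j, m) (6 * (Q - j)) = (110 + 6 * Q, m')" by (rule r)
    show "m' 2 = 1" "m' 6 = int (n + 39 + 2 * Q)" using m' by auto
  next
    fix s assume s: "j \<le> s \<and> s < Q"
    show "m' (n + 39 + 2 * s) = int (z0 s)"
    proof (cases "s = j")
      case True
      have "m' (n + 39 + 2 * s) = m1 (n + 39 + 2 * s)" using m'(5) True by simp
      then show ?thesis using m1(4) True by simp
    next
      case False then show ?thesis using m'(4) s by simp
    qed
    show "m' (n + 39 + 2 * s + 1) = int (z1 s)"
    proof (cases "s = j")
      case True
      have "m' (n + 39 + 2 * s + 1) = m1 (n + 39 + 2 * s + 1)" using m'(5) True by simp
      then show ?thesis using m1(5) True by simp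
    next
      case False then show ?thesis using m'(4) s by simp
    qed
  next
    fix a assume a: "a \<noteq> 4 \<and> a \<noteq> 6 \<and> \<not> (n + 39 + 2 * j \<le> a \<and> a < n + 39 + 2 * Q)"
    then have a1: "a \<noteq> 4 \<and> a \<noteq> 6 \<and> \<not> (n + 39 + 2 * (j + 1) \<le> a \<and> a < n + 39 + 2 * Q)"
      by arith
    have a2: "a \<noteq> 4 \<and> a \<noteq> 6 \<and> a \<noteq> n + 39 + 2 * j \<and> a \<noteq> n + 39 + 2 * j + 1"
      using a jQ by arith
    show "m' a = m a" using m'(5)[rule_format, OF a1] m1(6)[rule_format, OF a2] by simp
  qed
qed

definition base :: "nat \<Rightarrow> nat \<Rightarrow> (nat \<Rightarrow> int) \<Rightarrow> bool" where
  "base n mm m \<longleftrightarrow> m 0 = int n \<and> m 1 = int mm \<and> m 2 = 1 \<and> m 3 = 0 \<and> m 11 = int Q + 1 \<and>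
     m 12 = int (n + 39) \<and> m 13 = int (n + 20) \<and>
     (\<forall>s<Q. m (n + 39 + 2 * s) = int (z0 s) \<and> m (n + 39 + 2 * s + 1) = int (z1 s))"

lemma prelude_ok:
  fixes n mm :: nat
  defines "m0 \<equiv> (\<lambda>_. 0)(0 := int n, 1 := int mm)"
  shows "\<exists>mA. run prog (0, m0) (9 + 6 * Q) = (8, mA) \<and> base n mm mA \<and>
     mA 6 = int (n + 39 + 2 * Q) \<and> mA 14 = 0 \<and> (\<forall>a \<ge> n + 39 + 2 * Q. mA a = 0)"
proof -
  have s1: "run prog (0, m0) (Suc t) = run prog (1, m0(2 := 1)) t" for t
    by (simp add: run_step len_prog fetch main_def)
  define m1 where "m1 = m0(2 := 1)"
  define m2 where "m2 = m1(11 := int Q + 1, 4 := 19, 13 := int (n + 20), 12 := int (n + 39), 6 := int (n + 39))"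
  have s2: "run prog (1, m1) 7 = (110, m2)"
    unfolding m2_def m1_def m0_def
    by (simp add: run_step_num run_step len_prog fetch main_def fun_eq_iff)
  have m2: "m2 2 = 1" "m2 6 = int (n + 39 + 2 * 0)" by (simp_all add: m2_def m1_def)
  obtain m3 where m3: "run prog (110 + 6 * 0, m2) (6 * (Q - 0)) = (110 + 6 * Q, m3)" "m3 2 = 1"
     "m3 6 = int (n + 39 + 2 * Q)"
     "\<forall>s. 0 \<le> s \<and> s < Q \<longrightarrow> m3 (n + 39 + 2 * s) = int (z0 s) \<and> m3 (n + 39 + 2 * s + 1) = int (z1 s)"
     "\<forall>a. a \<noteq> 4 \<and> a \<noteq> 6 \<and> \<not> (n + 39 + 2 * 0 \<le> a \<and> a < n + 39 + 2 * Q) \<longrightarrow> m3 a = m2 a"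
    using init_loop[of 0 m2 n] m2 by auto
  have s4: "run prog (110 + 6 * Q, m3) 1 = (8, m3)"
    by (simp add: run_step len_prog fetch_init_end)
  have "9 + 6 * Q = Suc (7 + (6 * Q + 1))" by simp
  then have r: "run prog (0, m0) (9 + 6 * Q) = (8, m3)"
    using s1 s2 s4 m3(1) by (simp only: run_add) (simp add: m1_def[symmetric])
  have fr: "m3 a = m2 a" if "a < 20" "a \<noteq> 4" "a \<noteq> 6" for a using m3(5) that by auto
  show ?thesis
  proof (intro exI conjI)
    show "run prog (0, m0) (9 + 6 * Q) = (8, m3)" by (rule r)
    show "base n mm m3" unfolding base_def
      using fr[of 0] fr[of 1] fr[of 3] fr[of 11] fr[of 12] fr[of 13] m3(2,4)
      by (simp add: m2_def m1_def m0_def)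
    show "m3 6 = int (n + 39 + 2 * Q)" by (rule m3(3))
    show "m3 14 = 0" using fr[of 14] by (simp add: m2_def m1_def m0_def)
    show "\<forall>a\<ge>n + 39 + 2 * Q. m3 a = 0"
      using m3(5) by (auto simp: m2_def m1_def m0_def)
  qed
qed

lemma row0_it:
  assumes "j < Q" "m 2 = 1" "m 7 = int (n + 39 + 2 * Q + j)" "m 8 = int (Q - j)"
  shows "run prog (11, m) 4 = (if j + 1 < Q then 11 else 15,
     m(n + 39 + 2 * Q + j := 1, 7 := int (n + 39 + 2 * Q + (j + 1)), 8 := int (Q - (j + 1))))"
proof -
  have h: "run prog (11, m) 4 = (if 0 < int (Q - j) - 1 then 11 else 15,
     m(n + 39 + 2 * Q + j := 1, 7 := int (n + 39 + 2 * Q + j) + 1, 8 := int (Q - j) - 1))"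
    using assms by (simp add: run_step_num run_step len_prog fetch main_def del: of_nat_add of_nat_mult of_nat_diff)
  have e1: "(0 < int (Q - j) - 1) = (j + 1 < Q)" using assms(1) by linarith
  have e2: "int (Q - j) - 1 = int (Q - (j + 1))" using assms(1) by linarith
  have e3: "int (n + 39 + 2 * Q + j) + 1 = int (n + 39 + 2 * Q + (j + 1))" by simp
  have e4: "(0 < int (Q - (j + 1))) = (j + 1 < Q)" by linarith
  show ?thesis using h by (simp only: e1 e2 e3 e4)
qed

lemma row0_loop:
  assumes "j < Q" "m 2 = 1" "m 7 = int (n + 39 + 2 * Q + j)" "m 8 = int (Q - j)"
  shows "\<exists>m'. run prog (11, m) (4 * (Q - j)) = (15, m') \<and> m' 2 = 1 \<and>
    m' 7 = int (n + 39 + 2 * Q + Q) \<and> (\<forall>s. j \<le> s \<and> s < Q \<longrightarrow> m' (n + 39 + 2 * Q + s) = 1) \<and>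
    (\<forall>a. a \<noteq> 7 \<and> a \<noteq> 8 \<and> \<not> (n + 39 + 2 * Q + j \<le> a \<and> a < n + 39 + 2 * Q + Q) \<longrightarrow> m' a = m a)"
  using assms
proof (induction "Q - j" arbitrary: j m rule: less_induct)
  case less
  define m1 where "m1 = m(n + 39 + 2 * Q + j := 1, 7 := int (n + 39 + 2 * Q + (j + 1)), 8 := int (Q - (j + 1)))"
  have it: "run prog (11, m) 4 = (if j + 1 < Q then 11 else 15, m1)"
    unfolding m1_def using row0_it[OF less.prems] .
  show ?case
  proof (cases "j + 1 < Q")
    case False
    then have "Q = j + 1" using less.prems by simp
    then show ?thesis using it less.prems by (auto simp: m1_def)
  next
    case True
    have m1: "m1 2 = 1" "m1 7 = int (n + 39 + 2 * Q + (j + 1))" "m1 8 = int (Q - (j + 1))"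
      using less.prems by (simp_all add: m1_def)
    have lt: "Q - (j + 1) < Q - j" using True by simp
    from less.hyps[OF lt True m1]
    obtain m' where m': "run prog (11, m1) (4 * (Q - (j + 1))) = (15, m')" "m' 2 = 1"
      "m' 7 = int (n + 39 + 2 * Q + Q)" "\<forall>s. j + 1 \<le> s \<and> s < Q \<longrightarrow> m' (n + 39 + 2 * Q + s) = 1"
      "\<forall>a. a \<noteq> 7 \<and> a \<noteq> 8 \<and> \<not> (n + 39 + 2 * Q + (j + 1) \<le> a \<and> a < n + 39 + 2 * Q + Q) \<longrightarrow> m' a = m1 a"
      by blast
    have t: "4 * (Q - j) = 4 + 4 * (Q - (j + 1))" using True by simp
    have r: "run prog (11, m) (4 * (Q - j)) = (15, m')"
      unfolding t run_add it using True m'(1) by simp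
    show ?thesis
    proof (intro exI conjI allI impI)
      show "run prog (11, m) (4 * (Q - j)) = (15, m')" by (rule r)
      show "m' 2 = 1" "m' 7 = int (n + 39 + 2 * Q + Q)" using m' by auto
    next
      fix s assume s: "j \<le> s \<and> s < Q"
      show "m' (n + 39 + 2 * Q + s) = 1"
      proof (cases "s = j")
        case True
        then have "m' (n + 39 + 2 * Q + s) = m1 (n + 39 + 2 * Q + s)" using m'(5) by simp
        then show ?thesis using True by (simp add: m1_def)
      next
        case False then show ?thesis using m'(4) s by simp
      qed
    next
      fix a assume a: "a \<noteq> 7 \<and> a \<noteq> 8 \<and> \<not> (n + 39 + 2 * Q + j \<le> a \<and> a < n + 39 + 2 * Q + Q)"
      then have a1: "a \<noteq> 7 \<and> a \<noteq> 8 \<and> \<not> (n + 39 + 2 * Q + (j + 1) \<le> a \<and> a < n + 39 + 2 * Q + Q)"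
        by arith
      have "a \<noteq> n + 39 + 2 * Q + j" using a True by arith
      then show "m' a = m a" using m'(5)[rule_format, OF a1] a by (simp add: m1_def)
    qed
  qed
qed

definition dpinv :: "nat \<Rightarrow> nat \<Rightarrow> nat \<Rightarrow> (nat \<Rightarrow> int) \<Rightarrow> bool" where
  "dpinv n mm L m \<longleftrightarrow> base n mm m \<and> m 9 = int (n + 39 + 2 * Q + L * (Q + 1)) \<and>
     m 7 = int (n + 39 + 2 * Q + (L + 1) * (Q + 1)) \<and> m 10 = int (n - L) \<and> m 14 = 0 \<and>
     (\<forall>L' s. L' \<le> L \<and> s \<le> Q \<longrightarrow> m (n + 39 + 2 * Q + L' * (Q + 1) + s) = int (val L' s)) \<and>
     (\<forall>a. n + 39 + 2 * Q + L * (Q + 1) + Q \<le> a \<longrightarrow> m a = 0)"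

lemma base_frame:
  assumes "base n mm m" "\<forall>a. a \<notin> X \<longrightarrow> m' a = m a"
    "\<forall>a\<in>X. (4 \<le> a \<and> a \<le> 10) \<or> (14 \<le> a \<and> a \<le> 19) \<or> n + 39 + 2 * Q \<le> a \<or> (20 \<le> a \<and> a \<le> n + 38)"
  shows "base n mm m'"
proof -
  have nx: "a \<notin> X" if "a < 4 \<or> (11 \<le> a \<and> a \<le> 13) \<or> (n + 38 < a \<and> a < n + 39 + 2 * Q)" for a
  proof
    assume "a \<in> X"
    then have "(4 \<le> a \<and> a \<le> 10) \<or> (14 \<le> a \<and> a \<le> 19) \<or> n + 39 + 2 * Q \<le> a \<or> (20 \<le> a \<and> a \<le> n + 38)"
      using assms(3) by blast
    then show False using that by arith
  qed
  have "m' a = m a" if "a < 4 \<or> (11 \<le> a \<and> a \<le> 13) \<or> (n + 38 < a \<and> a < n + 39 + 2 * Q)" for a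
    using nx[OF that] assms(2) by blast
  note e = this
  have "m' (n + 39 + 2 * s) = m (n + 39 + 2 * s) \<and> m' (n + 39 + 2 * s + 1) = m (n + 39 + 2 * s + 1)"
    if "s < Q" for s using e[of "n + 39 + 2 * s"] e[of "n + 39 + 2 * s + 1"] that by simp
  moreover have "m' 0 = m 0" "m' 1 = m 1" "m' 2 = m 2" "m' 3 = m 3" "m' 11 = m 11" "m' 12 = m 12" "m' 13 = m 13"
    using e by simp_all
  ultimately show ?thesis using assms(1) unfolding base_def by simp
qed

lemma row0_phase:
  assumes "base n mm m" "m 6 = int (n + 39 + 2 * Q)" "m 14 = 0" "\<forall>a \<ge> n + 39 + 2 * Q. m a = 0"
  shows "\<exists>m'. run prog (8, m) (5 + 4 * Q) = (17, m') \<and> dpinv n mm 0 m'"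
proof -
  have B: "m 0 = int n" "m 2 = 1" "m 3 = 0" using assms(1) by (simp_all add: base_def)
  define m1 where "m1 = m(7 := int (n + 39 + 2 * Q + 0), 9 := int (n + 39 + 2 * Q), 8 := int (Q - 0))"
  have s1: "run prog (8, m) 3 = (11, m1)" unfolding m1_def
    using B assms(2) by (simp add: run_step_num run_step len_prog fetch main_def del: of_nat_add of_nat_mult of_nat_diff)
  have m1: "m1 2 = 1" "m1 7 = int (n + 39 + 2 * Q + 0)" "m1 8 = int (Q - 0)" using B by (simp_all add: m1_def)
  from row0_loop[OF Q_pos m1]
  obtain m2 where m2: "run prog (11, m1) (4 * (Q - 0)) = (15, m2)" "m2 2 = 1"
    "m2 7 = int (n + 39 + 2 * Q + Q)" "\<forall>s. 0 \<le> s \<and> s < Q \<longrightarrow> m2 (n + 39 + 2 * Q + s) = 1"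
    "\<forall>a. a \<noteq> 7 \<and> a \<noteq> 8 \<and> \<not> (n + 39 + 2 * Q + 0 \<le> a \<and> a < n + 39 + 2 * Q + Q) \<longrightarrow> m2 a = m1 a"
    by blast
  have m20: "m2 0 = int n" "m2 3 = 0" using m2(5) B by (auto simp: m1_def)
  define m3 where "m3 = m2(7 := int (n + 39 + 2 * Q + (0 + 1) * (Q + 1)), 10 := int (n - 0))"
  have s3: "run prog (15, m2) 2 = (17, m3)" unfolding m3_def
    using m2(2,3) m20 by (simp add: int_p1 run_step_num run_step len_prog fetch main_def del: of_nat_add of_nat_mult of_nat_diff)
  have r: "run prog (8, m) (5 + 4 * Q) = (17, m3)"
  proof -
    have "5 + 4 * Q = 3 + (4 * (Q - 0) + 2)" by simp
    then show ?thesis using s1 m2(1) s3 by (simp only: run_add)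
  qed
  have fr: "\<forall>a. a \<notin> {7,8,9,10} \<union> {n + 39 + 2 * Q..<n + 39 + 2 * Q + Q} \<longrightarrow> m3 a = m a"
  proof (intro allI impI)
    fix a assume a: "a \<notin> {7,8,9,10} \<union> {n + 39 + 2 * Q..<n + 39 + 2 * Q + Q}"
    then have "a \<noteq> 7 \<and> a \<noteq> 8 \<and> \<not> (n + 39 + 2 * Q + 0 \<le> a \<and> a < n + 39 + 2 * Q + Q)" by simp
    then have "m2 a = m1 a" using m2(5) by blast
    then show "m3 a = m a" using a by (simp add: m3_def m1_def)
  qed
  have fr1: "m3 a = m a" if "a \<noteq> 7" "a \<noteq> 8" "a \<noteq> 9" "a \<noteq> 10" "\<not> (n + 39 + 2 * Q \<le> a \<and> a < n + 39 + 2 * Q + Q)" for a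
    using fr that by simp
  have "dpinv n mm 0 m3" unfolding dpinv_def
  proof (intro conjI allI impI)
    show "base n mm m3" by (rule base_frame[OF assms(1) fr]) auto
    show "m3 9 = int (n + 39 + 2 * Q + 0 * (Q + 1))" using m2(5) by (simp add: m3_def m1_def)
    show "m3 7 = int (n + 39 + 2 * Q + (0 + 1) * (Q + 1))" by (simp add: m3_def)
    show "m3 10 = int (n - 0)" by (simp add: m3_def)
    show "m3 14 = 0" using fr1[of 14] assms(3) by simp
  next
    fix L' s :: nat assume a: "L' \<le> 0 \<and> s \<le> Q"
    then have L0: "L' = 0" by simp
    show "m3 (n + 39 + 2 * Q + L' * (Q + 1) + s) = int (val L' s)"
    proof (cases "s < Q")
      case True
      then have "m2 (n + 39 + 2 * Q + s) = 1" using m2(4) by simp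
      then show ?thesis using L0 True by (simp add: m3_def)
    next
      case False
      then have "s = Q" using a by simp
      then have "m3 (n + 39 + 2 * Q + L' * (Q + 1) + s) = m (n + 39 + 2 * Q + Q)"
        using fr1[of "n + 39 + 2 * Q + Q"] L0 by simp
      then show ?thesis using assms(4) L0 \<open>s = Q\<close> val_Q by simp
    qed
  next
    fix a assume a: "n + 39 + 2 * Q + 0 * (Q + 1) + Q \<le> a"
    then have "m3 a = m a" using fr1[of a] by simp
    then show "m3 a = 0" using assms(4) a by simp
  qed
  then show ?thesis using r by blast
qed

lemma inner_it:
  assumes "s < Q" "m 2 = 1" "m 6 = int (n + 39 + 2 * s)" "m 7 = int (n + 39 + 2 * Q + (L + 1) * (Q + 1) + s)"
    "m 8 = int (Q - s)" "m 9 = int (n + 39 + 2 * Q + L * (Q + 1))"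
    "m (n + 39 + 2 * s) = int (z0 s)" "m (n + 39 + 2 * s + 1) = int (z1 s)"
    "m (n + 39 + 2 * Q + L * (Q + 1) + z0 s) = int (val L (z0 s))"
    "m (n + 39 + 2 * Q + L * (Q + 1) + z1 s) = int (val L (z1 s))"
  shows "\<exists>m'. run prog (21, m) 13 = (if s + 1 < Q then 21 else 34, m') \<and> m' 2 = 1 \<and>
    m' 6 = int (n + 39 + 2 * (s + 1)) \<and> m' 7 = int (n + 39 + 2 * Q + (L + 1) * (Q + 1) + (s + 1)) \<and>
    m' 8 = int (Q - (s + 1)) \<and> m' (n + 39 + 2 * Q + (L + 1) * (Q + 1) + s) = int (val (Suc L) s) \<and>
    (\<forall>a. a \<notin> {4,5,6,7,8} \<and> a \<noteq> n + 39 + 2 * Q + (L + 1) * (Q + 1) + s \<longrightarrow> m' a = m a)"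
proof -
  have e1: "(Suc 0 < Q - s) = (s + 1 < Q)" by linarith
  have e2: "int (Q - s) - 1 = int (Q - (s + 1))" using assms(1) by linarith
  show ?thesis
    using assms e1 e2 by (simp add: nat_int_add int_p1 run_step_num run_step len_prog fetch main_def del: of_nat_add of_nat_mult of_nat_diff)
qed

lemma z1_le: "z1 s \<le> Q" using Q_pos by (simp add: z1_def)

lemma inner_loop:
  assumes "s < Q" "m 2 = 1" "m 6 = int (n + 39 + 2 * s)" "m 7 = int (n + 39 + 2 * Q + (L + 1) * (Q + 1) + s)"
    "m 8 = int (Q - s)" "m 9 = int (n + 39 + 2 * Q + L * (Q + 1))"
    "\<forall>t<Q. m (n + 39 + 2 * t) = int (z0 t) \<and> m (n + 39 + 2 * t + 1) = int (z1 t)"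
    "\<forall>t\<le>Q. m (n + 39 + 2 * Q + L * (Q + 1) + t) = int (val L t)"
  shows "\<exists>m'. run prog (21, m) (13 * (Q - s)) = (34, m') \<and> m' 2 = 1 \<and>
    m' 7 = int (n + 39 + 2 * Q + (L + 1) * (Q + 1) + Q) \<and>
    (\<forall>t. s \<le> t \<and> t < Q \<longrightarrow> m' (n + 39 + 2 * Q + (L + 1) * (Q + 1) + t) = int (val (Suc L) t)) \<and>
    (\<forall>a. a \<notin> {4,5,6,7,8} \<and> \<not> (n + 39 + 2 * Q + (L + 1) * (Q + 1) + s \<le> a \<and> a < n + 39 + 2 * Q + (L + 1) * (Q + 1) + Q) \<longrightarrow> m' a = m a)"
  using assms
proof (induction "Q - s" arbitrary: s m rule: less_induct)
  case less
  note P = less.prems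
  have r0: "m (n + 39 + 2 * Q + L * (Q + 1) + z0 s) = int (val L (z0 s))"
    using P(8) z0_lt[of s] by simp
  have r1: "m (n + 39 + 2 * Q + L * (Q + 1) + z1 s) = int (val L (z1 s))"
    using P(8) z1_le[of s] by simp
  have t: "m (n + 39 + 2 * s) = int (z0 s)" "m (n + 39 + 2 * s + 1) = int (z1 s)" using P(1,7) by auto
  from inner_it[OF P(1-6) t r0 r1]
  obtain m1 where m1: "run prog (21, m) 13 = (if s + 1 < Q then 21 else 34, m1)" "m1 2 = 1"
    "m1 6 = int (n + 39 + 2 * (s + 1))" "m1 7 = int (n + 39 + 2 * Q + (L + 1) * (Q + 1) + (s + 1))"
    "m1 8 = int (Q - (s + 1))" "m1 (n + 39 + 2 * Q + (L + 1) * (Q + 1) + s) = int (val (Suc L) s)"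
    "\<forall>a. a \<notin> {4,5,6,7,8} \<and> a \<noteq> n + 39 + 2 * Q + (L + 1) * (Q + 1) + s \<longrightarrow> m1 a = m a"
    by blast
  define D where "D = n + 39 + 2 * Q + (L + 1) * (Q + 1)"
  show ?case
  proof (cases "s + 1 < Q")
    case False
    then have sQ: "Q = s + 1" using P by simp
    show ?thesis
    proof (intro exI conjI allI impI)
      show "run prog (21, m) (13 * (Q - s)) = (34, m1)" using m1(1) False sQ by simp
      show "m1 2 = 1" by (rule m1(2))
      show "m1 7 = int (n + 39 + 2 * Q + (L + 1) * (Q + 1) + Q)" using m1(4) sQ by simp
    next
      fix t assume "s \<le> t \<and> t < Q"
      then have "t = s" using sQ by simp
      then show "m1 (n + 39 + 2 * Q + (L + 1) * (Q + 1) + t) = int (val (Suc L) t)" using m1(6) by simp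
    next
      fix a assume a: "a \<notin> {4,5,6,7,8} \<and> \<not> (n + 39 + 2 * Q + (L + 1) * (Q + 1) + s \<le> a \<and> a < n + 39 + 2 * Q + (L + 1) * (Q + 1) + Q)"
      then have "a \<noteq> n + 39 + 2 * Q + (L + 1) * (Q + 1) + s" using sQ by auto
      then show "m1 a = m a" using m1(7) a by blast
    qed
  next
    case True
    have lt: "Q - (s + 1) < Q - s" using True by simp
    have fr: "m1 a = m a" if "a \<notin> {4,5,6,7,8}" "a < D" for a
      using m1(7) that unfolding D_def by auto
    have tab: "\<forall>t<Q. m1 (n + 39 + 2 * t) = int (z0 t) \<and> m1 (n + 39 + 2 * t + 1) = int (z1 t)"
    proof (intro allI impI)
      fix t assume tQ: "t < Q"
      have "n + 39 + 2 * t + 1 < D" unfolding D_def using tQ by simp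
      then show "m1 (n + 39 + 2 * t) = int (z0 t) \<and> m1 (n + 39 + 2 * t + 1) = int (z1 t)"
        using fr[of "n + 39 + 2 * t"] fr[of "n + 39 + 2 * t + 1"] P(7) tQ by simp
    qed
    have row: "\<forall>t\<le>Q. m1 (n + 39 + 2 * Q + L * (Q + 1) + t) = int (val L t)"
    proof (intro allI impI)
      fix t assume tQ: "t \<le> Q"
      have "n + 39 + 2 * Q + L * (Q + 1) + t < D" unfolding D_def using tQ by simp
      then show "m1 (n + 39 + 2 * Q + L * (Q + 1) + t) = int (val L t)"
        using fr[of "n + 39 + 2 * Q + L * (Q + 1) + t"] P(8) tQ by simp
    qed
    have m9: "m1 9 = int (n + 39 + 2 * Q + L * (Q + 1))" using m1(7) P(6) by simp
    from less.hyps[OF lt True m1(2-5) m9 tab row]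
    obtain m' where m': "run prog (21, m1) (13 * (Q - (s + 1))) = (34, m')" "m' 2 = 1"
      "m' 7 = int (n + 39 + 2 * Q + (L + 1) * (Q + 1) + Q)"
      "\<forall>t. s + 1 \<le> t \<and> t < Q \<longrightarrow> m' (n + 39 + 2 * Q + (L + 1) * (Q + 1) + t) = int (val (Suc L) t)"
      "\<forall>a. a \<notin> {4,5,6,7,8} \<and> \<not> (n + 39 + 2 * Q + (L + 1) * (Q + 1) + (s + 1) \<le> a \<and> a < n + 39 + 2 * Q + (L + 1) * (Q + 1) + Q) \<longrightarrow> m' a = m1 a"
      by blast
    have tt: "13 * (Q - s) = 13 + 13 * (Q - (s + 1))" using True by simp
    show ?thesis
    proof (intro exI conjI allI impI)
      show "run prog (21, m) (13 * (Q - s)) = (34, m')" unfolding tt run_add m1(1) using True m'(1) by simp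
      show "m' 2 = 1" "m' 7 = int (n + 39 + 2 * Q + (L + 1) * (Q + 1) + Q)" using m' by auto
    next
      fix t assume ts: "s \<le> t \<and> t < Q"
      show "m' (n + 39 + 2 * Q + (L + 1) * (Q + 1) + t) = int (val (Suc L) t)"
      proof (cases "t = s")
        case True
        then have "m' (n + 39 + 2 * Q + (L + 1) * (Q + 1) + t) = m1 (n + 39 + 2 * Q + (L + 1) * (Q + 1) + t)"
          using m'(5) by simp
        then show ?thesis using m1(6) True by simp
      next
        case False then show ?thesis using m'(4) ts by simp
      qed
    next
      fix a assume a: "a \<notin> {4,5,6,7,8} \<and> \<not> (n + 39 + 2 * Q + (L + 1) * (Q + 1) + s \<le> a \<and> a < n + 39 + 2 * Q + (L + 1) * (Q + 1) + Q)"
      then have a1: "a \<notin> {4,5,6,7,8} \<and> \<not> (n + 39 + 2 * Q + (L + 1) * (Q + 1) + (s + 1) \<le> a \<and> a < n + 39 + 2 * Q + (L + 1) * (Q + 1) + Q)"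
        by auto
      have "a \<noteq> n + 39 + 2 * Q + (L + 1) * (Q + 1) + s" using a True by auto
      then show "m' a = m a" using m'(5)[rule_format, OF a1] m1(7) a by simp
    qed
  qed
qed

lemma outer_it:
  assumes "dpinv n mm L m" "L < n"
  shows "\<exists>m'. run prog (19, m) (6 + 13 * Q) = (if L + 1 < n then 19 else 38, m') \<and> dpinv n mm (L + 1) m'"
proof -
  note D = assms(1)[unfolded dpinv_def base_def]
  define m1 where "m1 = m(8 := int (Q - 0), 6 := int (n + 39 + 2 * 0))"
  have s1: "run prog (19, m) 2 = (21, m1)" unfolding m1_def
    using D by (simp add: run_step_num run_step len_prog fetch main_def del: of_nat_add of_nat_mult of_nat_diff)
  have tab: "\<forall>t<Q. m1 (n + 39 + 2 * t) = int (z0 t) \<and> m1 (n + 39 + 2 * t + 1) = int (z1 t)"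
    using D by (simp add: m1_def)
  have row: "\<forall>t\<le>Q. m1 (n + 39 + 2 * Q + L * (Q + 1) + t) = int (val L t)"
    using D by (simp add: m1_def)
  have r1: "m1 2 = 1" "m1 6 = int (n + 39 + 2 * 0)" "m1 7 = int (n + 39 + 2 * Q + (L + 1) * (Q + 1) + 0)"
    "m1 8 = int (Q - 0)" "m1 9 = int (n + 39 + 2 * Q + L * (Q + 1))" using D by (simp_all add: m1_def)
  from inner_loop[OF Q_pos r1 tab row]
  obtain m2 where m2: "run prog (21, m1) (13 * (Q - 0)) = (34, m2)" "m2 2 = 1"
    "m2 7 = int (n + 39 + 2 * Q + (L + 1) * (Q + 1) + Q)"
    "\<forall>t. 0 \<le> t \<and> t < Q \<longrightarrow> m2 (n + 39 + 2 * Q + (L + 1) * (Q + 1) + t) = int (val (Suc L) t)"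
    "\<forall>a. a \<notin> {4,5,6,7,8} \<and> \<not> (n + 39 + 2 * Q + (L + 1) * (Q + 1) + 0 \<le> a \<and> a < n + 39 + 2 * Q + (L + 1) * (Q + 1) + Q) \<longrightarrow> m2 a = m1 a"
    by blast
  have f2: "m2 a = m a" if "a \<notin> {4,5,6,7,8}" "\<not> (n + 39 + 2 * Q + (L + 1) * (Q + 1) \<le> a \<and> a < n + 39 + 2 * Q + (L + 1) * (Q + 1) + Q)" for a
    using m2(5) that by (auto simp: m1_def)
  have q: "m2 9 = int (n + 39 + 2 * Q + L * (Q + 1))" "m2 10 = int (n - L)" "m2 11 = int Q + 1"
    using f2[of 9] f2[of 10] f2[of 11] D by simp_all
  have e1: "int (n + 39 + 2 * Q + L * (Q + 1)) + (int Q + 1) = int (n + 39 + 2 * Q + (L + 1) * (Q + 1))" by simp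
  have e2: "int (n + 39 + 2 * Q + (L + 1) * (Q + 1) + Q) + 1 = int (n + 39 + 2 * Q + (L + 1 + 1) * (Q + 1))" by simp
  have e3: "int (n - L) - 1 = int (n - (L + 1))" using assms(2) by linarith
  have e4: "(0 < int (n - (L + 1))) = (L + 1 < n)" by linarith
  define m3 where "m3 = m2(9 := int (n + 39 + 2 * Q + (L + 1) * (Q + 1)), 7 := int (n + 39 + 2 * Q + (L + 1 + 1) * (Q + 1)), 10 := int (n - (L + 1)))"
  have s3: "run prog (34, m2) 4 = (if L + 1 < n then 19 else 38, m3)"
  proof -
    have "run prog (34, m2) 4 = (if 0 < int (n - L) - 1 then 19 else 38, m2(9 := int (n + 39 + 2 * Q + L * (Q + 1)) + (int Q + 1), 7 := int (n + 39 + 2 * Q + (L + 1) * (Q + 1) + Q) + 1, 10 := int (n - L) - 1))"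
      using m2(2,3) q by (simp add: run_step_num run_step len_prog fetch main_def del: of_nat_add of_nat_mult of_nat_diff)
    then show ?thesis unfolding m3_def by (simp only: e1 e2 e3 e4)
  qed
  have r: "run prog (19, m) (6 + 13 * Q) = (if L + 1 < n then 19 else 38, m3)"
  proof -
    have "6 + 13 * Q = 2 + (13 * (Q - 0) + 4)" by simp
    then show ?thesis using s1 m2(1) s3 by (simp only: run_add)
  qed
  define RB where "RB = n + 39 + 2 * Q + (L + 1) * (Q + 1)"
  have f3: "m3 a = m a" if "a \<notin> {4,5,6,7,8,9,10}" "\<not> (RB \<le> a \<and> a < RB + Q)" for a
    using f2[of a] that by (simp add: m3_def RB_def)
  have "dpinv n mm (L + 1) m3" unfolding dpinv_def
  proof (intro conjI allI impI)
    have fr: "\<forall>a. a \<notin> {4,5,6,7,8,9,10} \<union> {RB..<RB + Q} \<longrightarrow> m3 a = m a" using f3 by auto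
    have bm: "base n mm m" using assms(1) unfolding dpinv_def by simp
    show "base n mm m3" by (rule base_frame[OF bm fr]) (auto simp: RB_def)
    show "m3 9 = int (n + 39 + 2 * Q + (L + 1) * (Q + 1))" by (simp add: m3_def)
    show "m3 7 = int (n + 39 + 2 * Q + (L + 1 + 1) * (Q + 1))" by (simp add: m3_def)
    show "m3 10 = int (n - (L + 1))" by (simp add: m3_def)
    have "RB > 14" by (simp add: RB_def)
    then show "m3 14 = 0" using f3[of 14] D by simp
  next
    fix L' s :: nat assume a: "L' \<le> L + 1 \<and> s \<le> Q"
    show "m3 (n + 39 + 2 * Q + L' * (Q + 1) + s) = int (val L' s)"
    proof (cases "L' \<le> L")
      case True
      have "L' * (Q + 1) + s \<le> L * (Q + 1) + Q" using True a
        by (metis add_le_mono mult_le_mono1)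
      then have "n + 39 + 2 * Q + L' * (Q + 1) + s < RB" by (simp add: RB_def)
      then have "m3 (n + 39 + 2 * Q + L' * (Q + 1) + s) = m (n + 39 + 2 * Q + L' * (Q + 1) + s)"
        using f3 by simp
      then show ?thesis using D True a by simp
    next
      case False
      then have L': "L' = L + 1" using a by simp
      show ?thesis
      proof (cases "s < Q")
        case True
        then show ?thesis using m2(4) L' by (simp add: m3_def)
      next
        case False
        then have sQ: "s = Q" using a by simp
        have "m3 (n + 39 + 2 * Q + L' * (Q + 1) + s) = m (n + 39 + 2 * Q + L' * (Q + 1) + s)"
          using f3 L' sQ by (simp add: RB_def)
        also have "\<dots> = 0" using D L' sQ by simp
        finally show ?thesis using sQ val_Q by simp
      qed
    qed
  next
    fix a assume a: "n + 39 + 2 * Q + (L + 1) * (Q + 1) + Q \<le> a"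
    then have "m3 a = m a" using f3 by (simp add: RB_def)
    then show "m3 a = 0" using D a by simp
  qed
  then show ?thesis using r by blast
qed

lemma dp_loop:
  assumes "dpinv n mm L m" "L < n"
  shows "\<exists>m'. run prog (19, m) ((n - L) * (6 + 13 * Q)) = (38, m') \<and> dpinv n mm n m'"
  using assms
proof (induction "n - L" arbitrary: L m rule: less_induct)
  case less
  from outer_it[OF less.prems]
  obtain m1 where m1: "run prog (19, m) (6 + 13 * Q) = (if L + 1 < n then 19 else 38, m1)" "dpinv n mm (L + 1) m1"
    by blast
  show ?case
  proof (cases "L + 1 < n")
    case False
    then have "n = L + 1" using less.prems by simp
    then show ?thesis using m1 by auto
  next
    case True
    have lt: "n - (L + 1) < n - L" using True by simp
    from less.hyps[OF lt m1(2) True]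
    obtain m' where m': "run prog (19, m1) ((n - (L + 1)) * (6 + 13 * Q)) = (38, m')" "dpinv n mm n m'"
      by blast
    have tt: "(n - L) * (6 + 13 * Q) = (6 + 13 * Q) + (n - (L + 1)) * (6 + 13 * Q)"
    proof -
      have "n - L = Suc (n - (L + 1))" using True by simp
      then show ?thesis by simp
    qed
    show ?thesis using m1(1) m'(1) m'(2) True unfolding tt run_add by auto
  qed
qed

lemma dp_phase:
  assumes "dpinv n mm 0 m"
  shows "\<exists>m' t. t \<le> 2 + n * (6 + 13 * Q) \<and> run prog (17, m) t = (38, m') \<and> dpinv n mm n m'"
proof (cases "n > 0")
  case True
  have m10: "m 10 = int n" using assms by (simp add: dpinv_def)
  have s1: "run prog (17, m) 1 = (19, m)"
    using m10 True by (simp add: run_step len_prog fetch main_def)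
  from dp_loop[OF assms True]
  obtain m' where m': "run prog (19, m) ((n - 0) * (6 + 13 * Q)) = (38, m')" "dpinv n mm n m'" by blast
  have "run prog (17, m) (1 + n * (6 + 13 * Q)) = (38, m')"
    using s1 m'(1) unfolding run_add by simp
  then show ?thesis using m'(2) by (intro exI[of _ m'] exI[of _ "1 + n * (6 + 13 * Q)"]) auto
next
  case False
  then have n0: "n = 0" by simp
  have m10: "m 10 = 0" using assms n0 by (simp add: dpinv_def)
  have s1: "run prog (17, m) 2 = (38, m)"
    using m10 by (simp add: run_step_num run_step len_prog fetch main_def)
  then show ?thesis using assms n0 by (intro exI[of _ m] exI[of _ 2]) auto
qed

end

context wl begin

lemma int_2s: "2 * int s + int x = int (x + 2 * s)" by simp

definition waddr :: "nat \<Rightarrow> nat \<Rightarrow> nat" where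
  "waddr n i = (if i < 19 then n + 20 + i else i + 1)"

lemma dec_it:
  assumes "s < Q" "k < n" "m 2 = 1" "m 3 = 0" "m 12 = int (n + 39)" "m 14 = int s"
    "m (n + 39 + 2 * s) = int (z0 s)" "m (n + 39 + 2 * s + 1) = int (z1 s)"
    "m 9 = int (n + 39 + 2 * Q + L * (Q + 1))"
    "m (n + 39 + 2 * Q + L * (Q + 1) + z0 s) = int (val L (z0 s))"
    "m 1 = int r" "m 7 = int (k + 1)" "m 15 = 19 - int k" "m 19 = int (n + 20) - 1"
    "m 10 = int (n - k)" "m 11 = int Q + 1"
  shows "\<exists>t. t \<le> 20 \<and> (\<exists>m'. run prog (45, m) t = (if k + 1 < n then 45 else 69, m') \<and>
    m' 1 = int (if r \<le> val L (z0 s) then r else r - val L (z0 s)) \<and>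
    m' 14 = int (if r \<le> val L (z0 s) then z0 s else z1 s) \<and>
    m' (waddr n k) = (if r \<le> val L (z0 s) then 0 else 1) \<and>
    m' 7 = int (k + 1 + 1) \<and> m' 15 = 19 - int (k + 1) \<and> m' 9 = m 9 - (int Q + 1) \<and>
    m' 10 = int (n - (k + 1)) \<and>
    (\<forall>a. a \<notin> {1,4,6,7,9,10,14,15,16,17,18} \<and> a \<noteq> waddr n k \<longrightarrow> m' a = m a))"
proof -
  define v where "v = val L (z0 s)"
  have e1: "int (k + 1) + 1 = int (k + 1 + 1)" by simp
  have e2: "19 - int k - 1 = 19 - int (k + 1)" by simp
  have e3: "int (n - k) - 1 = int (n - (k + 1))" using assms(2) by linarith
  have e4: "(0 < int (n - (k + 1))) = (k + 1 < n)" by linarith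
  have e5: "nat (int (k + 1) + (int (n + 20) - 1)) = n + 20 + k" by simp
  have e6: "nat (int (k + 1)) = k + 1" by simp
  consider (a) "r \<le> v" "k < 19" | (b) "r \<le> v" "\<not> k < 19" | (c) "\<not> r \<le> v" "k < 19" | (d) "\<not> r \<le> v" "\<not> k < 19"
    by blast
  then show ?thesis
  proof cases
    case a
    have c1: "(0 < int r - int v) = False" "(0 < 19 - int k) = True" using a by auto
    show ?thesis
      apply (rule exI[of _ 19])
      using assms a c1 e1 e2 e3 e4 e5 e6 unfolding v_def waddr_def
      by (simp add: nat_int_add int_2s run_step_num run_step len_prog fetch main_def del: of_nat_add of_nat_mult of_nat_diff)
  next
    case b
    have c1: "(0 < int r - int v) = False" "(0 < 19 - int k) = False" using b by auto
    show ?thesis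
      apply (rule exI[of _ 19])
      using assms b c1 e1 e2 e3 e4 e5 e6 unfolding v_def waddr_def
      by (simp add: nat_int_add int_2s run_step_num run_step len_prog fetch main_def del: of_nat_add of_nat_mult of_nat_diff)
  next
    case c
    have c1: "(0 < int r - int v) = True" "(0 < 19 - int k) = True" using c by auto
    have e7: "int r - int v + 0 = int (r - v)" using c by simp
    show ?thesis
      apply (rule exI[of _ 20])
      using assms c c1 e1 e2 e3 e4 e5 e6 e7 unfolding v_def waddr_def
      by (simp add: nat_int_add int_2s run_step_num run_step len_prog fetch main_def del: of_nat_add of_nat_mult of_nat_diff)
  next
    case d
    have c1: "(0 < int r - int v) = True" "(0 < 19 - int k) = False" using d by auto
    have e7: "int r - int v + 0 = int (r - v)" using d by simp
    show ?thesis
      apply (rule exI[of _ 20])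
      using assms d c1 e1 e2 e3 e4 e5 e6 e7 unfolding v_def waddr_def
      by (simp add: nat_int_add int_2s run_step_num run_step len_prog fetch main_def del: of_nat_add of_nat_mult of_nat_diff)
  qed
qed

lemma base_frame1:
  assumes "base n mm m" "\<forall>a. a \<notin> X \<longrightarrow> m' a = m a"
    "\<forall>a\<in>X. a = 1 \<or> (4 \<le> a \<and> a \<le> 10) \<or> (14 \<le> a \<and> a \<le> 19) \<or> n + 39 + 2 * Q \<le> a \<or> (20 \<le> a \<and> a \<le> n + 38)"
    "m' 1 = int mm'"
  shows "base n mm' m'"
proof -
  have nx: "a \<notin> X" if "a = 0 \<or> (2 \<le> a \<and> a < 4) \<or> (11 \<le> a \<and> a \<le> 13) \<or> (n + 38 < a \<and> a < n + 39 + 2 * Q)" for a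
  proof
    assume "a \<in> X"
    then have "a = 1 \<or> (4 \<le> a \<and> a \<le> 10) \<or> (14 \<le> a \<and> a \<le> 19) \<or> n + 39 + 2 * Q \<le> a \<or> (20 \<le> a \<and> a \<le> n + 38)"
      using assms(3) by blast
    then show False using that by arith
  qed
  have e: "m' a = m a" if "a = 0 \<or> (2 \<le> a \<and> a < 4) \<or> (11 \<le> a \<and> a \<le> 13) \<or> (n + 38 < a \<and> a < n + 39 + 2 * Q)" for a
    using nx[OF that] assms(2) by blast
  have "m' (n + 39 + 2 * s) = m (n + 39 + 2 * s) \<and> m' (n + 39 + 2 * s + 1) = m (n + 39 + 2 * s + 1)"
    if "s < Q" for s using e[of "n + 39 + 2 * s"] e[of "n + 39 + 2 * s + 1"] that by simp
  moreover have "m' 0 = m 0" "m' 2 = m 2" "m' 3 = m 3" "m' 11 = m 11" "m' 12 = m 12" "m' 13 = m 13"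
    using e by simp_all
  ultimately show ?thesis using assms(1,4) unfolding base_def by simp
qed

definition bitv :: "bool \<Rightarrow> int" where "bitv b = (if b then 1 else 0)"

definition decinv :: "nat \<Rightarrow> nat \<Rightarrow> nat \<Rightarrow> nat \<Rightarrow> nat \<Rightarrow> (nat \<Rightarrow> int) \<Rightarrow> bool" where
  "decinv n mm k r s m \<longleftrightarrow> base n r m \<and>
     (\<forall>L' s'. L' \<le> n \<and> s' \<le> Q \<longrightarrow> m (n + 39 + 2 * Q + L' * (Q + 1) + s') = int (val L' s')) \<and>
     m 9 = int (n + 39 + 2 * Q + (n - 1 - k) * (Q + 1)) \<and> m 7 = int (k + 1) \<and> m 15 = 19 - int k \<and>
     m 19 = int (n + 20) - 1 \<and> m 10 = int (n - k) \<and> m 14 = int s \<and>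
     (\<forall>i<k. m (waddr n i) = bitv (decs 0 n mm ! i)) \<and>
     s < Q \<and> 1 \<le> r \<and> r \<le> val (n - k) s \<and> drop k (decs 0 n mm) = decs s (n - k) r"

lemma waddr_inj: "i < n \<Longrightarrow> j < n \<Longrightarrow> waddr n i = waddr n j \<Longrightarrow> i = j"
  by (auto simp: waddr_def split: if_splits)

lemma waddr_range: "k < n \<Longrightarrow> 20 \<le> waddr n k \<and> waddr n k \<le> n + 38"
  by (auto simp: waddr_def)

lemma len_decs: "length (decs s L r) = L"
  by (induction s L r rule: decs.induct) auto

lemma dec_step:
  assumes "decinv n mm k r s m" "k < n"
  shows "\<exists>t. t \<le> 20 \<and> (\<exists>m' r' s'. run prog (45, m) t = (if k + 1 < n then 45 else 69, m') \<and>
     (k + 1 < n \<longrightarrow> decinv n mm (k + 1) r' s' m') \<and>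
     (\<forall>i<k + 1. m' (waddr n i) = bitv (decs 0 n mm ! i)) \<and> m' 13 = int (n + 20) \<and> m' 3 = 0)"
proof -
  note D = assms(1)[unfolded decinv_def]
  note B = D[THEN conjunct1, unfolded base_def]
  define L where "L = n - 1 - k"
  have nk: "n - k = Suc L" using assms(2) by (simp add: L_def)
  have sQ: "s < Q" using D by simp
  have rowL: "m (n + 39 + 2 * Q + L * (Q + 1) + z0 s) = int (val L (z0 s))"
    using D z0_lt[of s] by (simp add: L_def)
  have tab: "m (n + 39 + 2 * s) = int (z0 s)" "m (n + 39 + 2 * s + 1) = int (z1 s)" using B sQ by auto
  have regs: "m 2 = 1" "m 3 = 0" "m 12 = int (n + 39)" "m 14 = int s"
    "m 9 = int (n + 39 + 2 * Q + L * (Q + 1))" "m 1 = int r" "m 7 = int (k + 1)" "m 15 = 19 - int k"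
    "m 19 = int (n + 20) - 1" "m 10 = int (n - k)" "m 11 = int Q + 1"
    using B D by (simp_all add: L_def)
  from dec_it[OF sQ assms(2) regs(1-4) tab regs(5) rowL regs(6-11)]
  obtain t m' where tm: "t \<le> 20" "run prog (45, m) t = (if k + 1 < n then 45 else 69, m')"
    "m' 1 = int (if r \<le> val L (z0 s) then r else r - val L (z0 s))"
    "m' 14 = int (if r \<le> val L (z0 s) then z0 s else z1 s)"
    "m' (waddr n k) = (if r \<le> val L (z0 s) then 0 else 1)"
    "m' 7 = int (k + 1 + 1)" "m' 15 = 19 - int (k + 1)" "m' 9 = m 9 - (int Q + 1)"
    "m' 10 = int (n - (k + 1))"
    "\<forall>a. a \<notin> {1,4,6,7,9,10,14,15,16,17,18} \<and> a \<noteq> waddr n k \<longrightarrow> m' a = m a"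
    by blast
  define v where "v = val L (z0 s)"
  define r' where "r' = (if r \<le> v then r else r - v)"
  define s' where "s' = (if r \<le> v then z0 s else z1 s)"
  have dd: "decs s (Suc L) r = (\<not> r \<le> v) # decs s' L r'"
    by (simp add: v_def r'_def s'_def)
  have dk: "drop k (decs 0 n mm) = (\<not> r \<le> v) # decs s' L r'" using D nk dd by simp
  have ck: "decs 0 n mm ! k = (\<not> r \<le> v)"
  proof -
    have "k < length (decs 0 n mm)" using assms(2) by (simp add: len_decs)
    then have "drop k (decs 0 n mm) = decs 0 n mm ! k # drop (Suc k) (decs 0 n mm)"
      by (rule Cons_nth_drop_Suc[symmetric])
    then show ?thesis using dk by simp
  qed
  have dk1: "drop (k + 1) (decs 0 n mm) = decs s' L r'"
  proof -
    have "k < length (decs 0 n mm)" using assms(2) by (simp add: len_decs)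
    then have "drop k (decs 0 n mm) = decs 0 n mm ! k # drop (Suc k) (decs 0 n mm)"
      by (rule Cons_nth_drop_Suc[symmetric])
    then show ?thesis using dk by simp
  qed
  have wr: "m' (waddr n k) = bitv (decs 0 n mm ! k)" using tm(5) ck by (simp add: bitv_def v_def)
  have wk: "20 \<le> waddr n k \<and> waddr n k \<le> n + 38" using waddr_range[OF assms(2)] .
  have bits: "\<forall>i<k + 1. m' (waddr n i) = bitv (decs 0 n mm ! i)"
  proof (intro allI impI)
    fix i assume i: "i < k + 1"
    show "m' (waddr n i) = bitv (decs 0 n mm ! i)"
    proof (cases "i = k")
      case True then show ?thesis using wr by simp
    next
      case False
      then have ik: "i < k" using i by simp
      have "waddr n i \<noteq> waddr n k" using waddr_inj[of i n k] ik assms(2) False by auto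
      moreover have "20 \<le> waddr n i" using waddr_range[of i n] ik assms(2) by simp
      ultimately have "m' (waddr n i) = m (waddr n i)" using tm(10) by auto
      then show ?thesis using D ik by simp
    qed
  qed
  have "13 \<noteq> waddr n k" using wk by simp
  then have m13: "m' 13 = int (n + 20)" using tm(10) B by simp
  have "3 \<noteq> waddr n k" using wk by simp
  then have m3: "m' 3 = 0" using tm(10) B by simp
  have inv: "decinv n mm (k + 1) r' s' m'" if k1: "k + 1 < n"
  proof -
    have vpos: "1 \<le> r" "r \<le> val (Suc L) s" using D nk by auto
    have sQ': "s' < Q" and rr: "1 \<le> r'" "r' \<le> val L s'"
    proof -
      show "s' < Q"
      proof (cases "r \<le> v")
        case True then show ?thesis using z0_lt by (simp add: s'_def)
      next
        case False
        then have "0 < val L (z1 s)" using vpos sQ by (simp add: v_def)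
        then have "z1 s \<noteq> Q" using val_Q by auto
        then show ?thesis using z1_le[of s] False by (simp add: s'_def)
      qed
      show "1 \<le> r'" using vpos by (auto simp: r'_def)
      show "r' \<le> val L s'" using vpos sQ by (auto simp: r'_def s'_def v_def)
    qed
    have fr: "\<forall>a. a \<notin> {1,4,6,7,9,10,14,15,16,17,18} \<union> {waddr n k} \<longrightarrow> m' a = m a" using tm(10) by simp
    have bs: "base n r' m'"
      by (rule base_frame1[OF D[THEN conjunct1] fr]) (use wk tm(3) in \<open>auto simp: r'_def v_def\<close>)
    have rows: "\<forall>L' s''. L' \<le> n \<and> s'' \<le> Q \<longrightarrow> m' (n + 39 + 2 * Q + L' * (Q + 1) + s'') = int (val L' s'')"
    proof (intro allI impI)
      fix L' s'' assume a: "L' \<le> n \<and> s'' \<le> Q"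
      have "n + 38 < n + 39 + 2 * Q + L' * (Q + 1) + s''" by simp
      then have "m' (n + 39 + 2 * Q + L' * (Q + 1) + s'') = m (n + 39 + 2 * Q + L' * (Q + 1) + s'')"
        using tm(10) wk by auto
      then show "m' (n + 39 + 2 * Q + L' * (Q + 1) + s'') = int (val L' s'')" using D a by simp
    qed
    obtain L2 where L2: "L = Suc L2" using k1 by (cases L) (auto simp: L_def)
    have m9: "m' 9 = int (n + 39 + 2 * Q + (n - 1 - (k + 1)) * (Q + 1))"
    proof -
      have "n - 1 - (k + 1) = L2" using L2 by (simp add: L_def)
      then show ?thesis using tm(8) regs(5) L2 by simp
    qed
    have nk1: "n - (k + 1) = L" using assms(2) by (simp add: L_def)
    have "19 \<noteq> waddr n k" using wk by simp
    then have m19: "m' 19 = int (n + 20) - 1" using tm(10) regs(9) by simp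
    show ?thesis unfolding decinv_def
      using bs rows m9 m19 tm(6,7,9) tm(4) bits sQ' rr dk1 nk1
      by (simp add: r'_def s'_def v_def)
  qed
  show ?thesis using tm(1,2) inv bits m13 m3 by blast
qed

lemma dec_loop:
  assumes "decinv n mm k r s m" "k < n"
  shows "\<exists>t. t \<le> 20 * (n - k) \<and> (\<exists>m'. run prog (45, m) t = (69, m') \<and>
     (\<forall>i<n. m' (waddr n i) = bitv (decs 0 n mm ! i)) \<and> m' 13 = int (n + 20) \<and> m' 3 = 0)"
  using assms
proof (induction "n - k" arbitrary: k r s m rule: less_induct)
  case less
  from dec_step[OF less.prems]
  obtain t m' r' s' where tm: "t \<le> 20" "run prog (45, m) t = (if k + 1 < n then 45 else 69, m')"
    "k + 1 < n \<longrightarrow> decinv n mm (k + 1) r' s' m'"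
    "\<forall>i<k + 1. m' (waddr n i) = bitv (decs 0 n mm ! i)" "m' 13 = int (n + 20)" "m' 3 = 0"
    by blast
  show ?case
  proof (cases "k + 1 < n")
    case False
    then have "n = k + 1" using less.prems by simp
    then show ?thesis using tm by (intro exI[of _ t]) auto
  next
    case True
    have lt: "n - (k + 1) < n - k" using True by simp
    from less.hyps[OF lt tm(3)[rule_format, OF True] True]
    obtain t2 m2 where t2: "t2 \<le> 20 * (n - (k + 1))" "run prog (45, m') t2 = (69, m2)"
      "\<forall>i<n. m2 (waddr n i) = bitv (decs 0 n mm ! i)" "m2 13 = int (n + 20)" "m2 3 = 0" by blast
    have "run prog (45, m) (t + t2) = (69, m2)" unfolding run_add using tm(2) True t2(2) by simp
    moreover have "t + t2 \<le> 20 * (n - k)" using tm(1) t2(1) True by simp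
    ultimately show ?thesis using t2 by blast
  qed
qed

lemma dec_start:
  assumes "dpinv n mm n m" "1 \<le> mm" "mm \<le> val n 0"
  shows "\<exists>t. t \<le> 7 + 20 * n \<and> (\<exists>m'. run prog (38, m) t = (69, m') \<and>
     (\<forall>i<n. m' (waddr n i) = bitv (decs 0 n mm ! i)) \<and> m' 13 = int (n + 20) \<and> m' 3 = 0)"
proof -
  note D = assms(1)[unfolded dpinv_def]
  note B = D[THEN conjunct1, unfolded base_def]
  define m1 where "m1 = m(9 := m 9 - (int Q + 1), 15 := 19, 7 := int (0 + 1), 19 := int (n + 20) - 1, 10 := int (n - 0))"
  have s1: "run prog (38, m) 5 = (43, m1)" unfolding m1_def
    using B D by (simp add: run_step_num run_step len_prog fetch main_def del: of_nat_add of_nat_mult of_nat_diff)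
  show ?thesis
  proof (cases "n > 0")
    case False
    then have n0: "n = 0" by simp
    have "run prog (43, m1) 2 = (69, m1)" using n0
      by (simp add: m1_def run_step_num run_step len_prog fetch main_def)
    then have "run prog (38, m) 7 = (69, m1)" using s1 run_add[of prog "(38, m)" 5 2] by simp
    moreover have "m1 13 = int (n + 20)" "m1 3 = 0" using B by (simp_all add: m1_def)
    ultimately show ?thesis using n0 by (intro exI[of _ 7]) auto
  next
    case True
    have s2: "run prog (43, m1) 1 = (45, m1)" using True
      by (simp add: m1_def run_step len_prog fetch main_def)
    have inv: "decinv n mm 0 mm 0 m1" unfolding decinv_def
    proof (intro conjI)
      have fr: "\<forall>a. a \<notin> {7,9,10,15,19} \<longrightarrow> m1 a = m a" by (simp add: m1_def)
      show "base n mm m1" by (rule base_frame[OF D[THEN conjunct1] fr]) auto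
      obtain n' where n': "n = Suc n'" using True by (cases n) auto
      show "m1 9 = int (n + 39 + 2 * Q + (n - 1 - 0) * (Q + 1))" using D n' by (simp add: m1_def)
    qed (use D assms True Q_pos in \<open>simp_all add: m1_def\<close>)
    from dec_loop[OF inv True]
    obtain t m' where tm: "t \<le> 20 * (n - 0)" "run prog (45, m1) t = (69, m')"
      "\<forall>i<n. m' (waddr n i) = bitv (decs 0 n mm ! i)" "m' 13 = int (n + 20)" "m' 3 = 0" by blast
    have "run prog (38, m) (5 + (1 + t)) = (69, m')" unfolding run_add using s1 s2 tm(2) by simp
    then show ?thesis using tm by (intro exI[of _ "5 + (1 + t)"]) auto
  qed
qed

lemma nat_int_num: "nat (int x + numeral k) = x + numeral k"
proof -
  have "int x + numeral k = int (x + numeral k)" by simp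
  then show ?thesis by (simp only: nat_int)
qed
lemma nat_num_int: "nat (numeral k + int x) = numeral k + x"
proof -
  have "numeral k + int x = int (numeral k + x)" by simp
  then show ?thesis by (simp only: nat_int)
qed
lemma nat_1_int: "nat (1 + int x) = 1 + x" by simp
lemma fin_run: "m 3 = 0 \<Longrightarrow> m 13 = int (n + 20) \<Longrightarrow> run prog (69, m) 40 = (109, m(0 := int (n + 20), 19 := m (38 + n), 18 := m (37 + n), 17 := m (36 + n), 16 := m (35 + n), 15 := m (34 + n), 14 := m (33 + n), 13 := m (32 + n), 12 := m (31 + n), 11 := m (30 + n), 10 := m (29 + n), 9 := m (28 + n), 8 := m (27 + n), 7 := m (26 + n), 6 := m (25 + n), 5 := m (24 + n), 4 := m (23 + n), 3 := m (22 + n), 2 := m (21 + n), Suc 0 := m (n + 20)))"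
  by (simp add: nat_int_num nat_num_int nat_1_int run_step_num run_step len_prog fetch main_def del: of_nat_add of_nat_mult of_nat_diff)

lemma fin_out1: "1 \<le> j \<Longrightarrow> j \<le> 19 \<Longrightarrow> (m(0 := int (n + 20), 19 := m (38 + n), 18 := m (37 + n), 17 := m (36 + n), 16 := m (35 + n), 15 := m (34 + n), 14 := m (33 + n), 13 := m (32 + n), 12 := m (31 + n), 11 := m (30 + n), 10 := m (29 + n), 9 := m (28 + n), 8 := m (27 + n), 7 := m (26 + n), 6 := m (25 + n), 5 := m (24 + n), 4 := m (23 + n), 3 := m (22 + n), 2 := m (21 + n), Suc 0 := m (n + 20))) j = m (n + 19 + j)"
  apply (auto simp: fun_upd_apply add.commute)
  apply presburger
  done

lemma fin_out2: "20 \<le> a \<Longrightarrow> (m(0 := int (n + 20), 19 := m (38 + n), 18 := m (37 + n), 17 := m (36 + n), 16 := m (35 + n), 15 := m (34 + n), 14 := m (33 + n), 13 := m (32 + n), 12 := m (31 + n), 11 := m (30 + n), 10 := m (29 + n), 9 := m (28 + n), 8 := m (27 + n), 7 := m (26 + n), 6 := m (25 + n), 5 := m (24 + n), 4 := m (23 + n), 3 := m (22 + n), 2 := m (21 + n), Suc 0 := m (n + 20))) a = m a"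
  by (auto simp: fun_upd_apply)

lemma halt109: "halted prog (109, m)"
  by (simp add: halted_def fetch main_def)

lemma card_WWL: "card (WWL n \<beta> p) = val n 0"
proof -
  have "wwl \<beta> p []" by (simp add: wwl_def)
  from card_S[OF this, of n] show ?thesis by (simp add: S_Nil st_Nil)
qed

lemma main_run:
  assumes "1 \<le> mm" "mm \<le> card (WWL n \<beta> p)"
  shows "\<exists>t \<le> (100 + 20 * Q) * (n + 1). halted prog (run prog (init n mm) t) \<and>
    (\<forall>k<n. snd (run prog (init n mm) t) (k + 1) = bitv (decs 0 n mm ! k))"
proof -
  have mmv: "mm \<le> val n 0" using assms(2) card_WWL by simp
  from prelude_ok[of n mm]
  obtain mA where A: "run prog (0, (\<lambda>_. 0)(0 := int n, 1 := int mm)) (9 + 6 * Q) = (8, mA)" "base n mm mA"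
     "mA 6 = int (n + 39 + 2 * Q)" "mA 14 = 0" "\<forall>a \<ge> n + 39 + 2 * Q. mA a = 0" by blast
  from row0_phase[OF A(2-5)]
  obtain m1 where m1: "run prog (8, mA) (5 + 4 * Q) = (17, m1)" "dpinv n mm 0 m1" by blast
  from dp_phase[OF m1(2)]
  obtain m2 t2 where m2: "t2 \<le> 2 + n * (6 + 13 * Q)" "run prog (17, m1) t2 = (38, m2)" "dpinv n mm n m2"
    by blast
  from dec_start[OF m2(3) assms(1) mmv]
  obtain t3 m3 where m3: "t3 \<le> 7 + 20 * n" "run prog (38, m2) t3 = (69, m3)"
    "\<forall>i<n. m3 (waddr n i) = bitv (decs 0 n mm ! i)" "m3 13 = int (n + 20)" "m3 3 = 0" by blast
  define mF where "mF = m3(0 := int (n + 20), 19 := m3 (38 + n), 18 := m3 (37 + n), 17 := m3 (36 + n), 16 := m3 (35 + n), 15 := m3 (34 + n), 14 := m3 (33 + n), 13 := m3 (32 + n), 12 := m3 (31 + n), 11 := m3 (30 + n), 10 := m3 (29 + n), 9 := m3 (28 + n), 8 := m3 (27 + n), 7 := m3 (26 + n), 6 := m3 (25 + n), 5 := m3 (24 + n), 4 := m3 (23 + n), 3 := m3 (22 + n), 2 := m3 (21 + n), Suc 0 := m3 (n + 20))"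
  have F: "run prog (69, m3) 40 = (109, mF)" unfolding mF_def using fin_run[OF m3(5,4)] .
  define t where "t = (9 + 6 * Q) + ((5 + 4 * Q) + (t2 + (t3 + 40)))"
  have R: "run prog (init n mm) t = (109, mF)"
  proof -
    have "run prog (init n mm) t = run prog (run prog (init n mm) (9 + 6 * Q)) ((5 + 4 * Q) + (t2 + (t3 + 40)))"
      unfolding t_def by (rule run_add)
    also have "run prog (init n mm) (9 + 6 * Q) = (8, mA)" using A(1) by (simp add: init_def)
    also have "run prog (8, mA) ((5 + 4 * Q) + (t2 + (t3 + 40))) = run prog (run prog (8, mA) (5 + 4 * Q)) (t2 + (t3 + 40))"
      by (rule run_add)
    also have "run prog (8, mA) (5 + 4 * Q) = (17, m1)" by (rule m1(1))
    also have "run prog (17, m1) (t2 + (t3 + 40)) = run prog (run prog (17, m1) t2) (t3 + 40)"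
      by (rule run_add)
    also have "run prog (17, m1) t2 = (38, m2)" by (rule m2(2))
    also have "run prog (38, m2) (t3 + 40) = run prog (run prog (38, m2) t3) 40"
      by (rule run_add)
    also have "run prog (38, m2) t3 = (69, m3)" by (rule m3(2))
    finally show ?thesis using F by simp
  qed
  have tb: "t \<le> (100 + 20 * Q) * (n + 1)"
  proof -
    have "n * (26 + 13 * Q) = n * (6 + 13 * Q) + 20 * n" by (simp add: algebra_simps)
    then have "t \<le> 63 + 10 * Q + n * (26 + 13 * Q)" using m2(1) m3(1) unfolding t_def by linarith
    also have "\<dots> \<le> (100 + 20 * Q) + n * (100 + 20 * Q)"
      by (intro add_mono mult_le_mono2) auto
    finally show ?thesis by (simp add: algebra_simps)
  qed
  have out: "\<forall>k<n. mF (k + 1) = bitv (decs 0 n mm ! k)"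
  proof (intro allI impI)
    fix k assume k: "k < n"
    show "mF (k + 1) = bitv (decs 0 n mm ! k)"
    proof (cases "k < 19")
      case True
      then have "mF (k + 1) = m3 (n + 19 + (k + 1))" unfolding mF_def by (intro fin_out1) auto
      also have "\<dots> = m3 (waddr n k)" using True by (simp add: waddr_def algebra_simps)
      finally show ?thesis using m3(3) k by simp
    next
      case False
      then have "mF (k + 1) = m3 (k + 1)" unfolding mF_def by (intro fin_out2) auto
      also have "\<dots> = m3 (waddr n k)" using False by (simp add: waddr_def)
      finally show ?thesis using m3(3) k by simp
    qed
  qed
  show ?thesis using R tb out halt109 by (intro exI[of _ t]) auto
qed

end

theorem theorem10:
  fixes \<beta> p :: nat
  assumes "\<beta> > 0" and "p > 0"
  shows "\<exists>prog :: instr list. \<exists>C :: nat. \<forall>n m.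
           1 \<le> m \<and> m \<le> card (WWL n \<beta> p) \<longrightarrow>
           (\<exists>t \<le> C * (n + 1).
               halted prog (run prog (init n m) t)
             \<and> card (used_cells prog (init n m) t) \<le> C * (n + 1)
             \<and> (\<exists>c \<in> WWL n \<beta> p. ord_in (WWL n \<beta> p) c = m
                   \<and> (\<forall>k<n. snd (run prog (init n m) t) (k + 1) = (if c ! k then 1 else 0))))"
proof -
  interpret wl \<beta> p using assms(1) by unfold_locales
  have H: "\<exists>t \<le> (3 * (100 + 20 * Q)) * (n + 1).
               halted prog (run prog (init n mm) t)
             \<and> card (used_cells prog (init n mm) t) \<le> (3 * (100 + 20 * Q)) * (n + 1)
             \<and> (\<exists>c \<in> WWL n \<beta> p. ord_in (WWL n \<beta> p) c = mm
                   \<and> (\<forall>k<n. snd (run prog (init n mm) t) (k + 1) = (if c ! k then 1 else 0)))"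
    if a: "1 \<le> mm \<and> mm \<le> card (WWL n \<beta> p)" for n mm
  proof -
    from main_run[of mm n] a
    obtain t where t: "t \<le> (100 + 20 * Q) * (n + 1)" "halted prog (run prog (init n mm) t)"
      "\<forall>k<n. snd (run prog (init n mm) t) (k + 1) = bitv (decs 0 n mm ! k)" by blast
    have c: "decs 0 n mm \<in> WWL n \<beta> p \<and> ord_in (WWL n \<beta> p) (decs 0 n mm) = mm"
      using main_comb a by blast
    have cu: "card (used_cells prog (init n mm) t) \<le> 3 * t" by (rule card_used)
    have e: "(3 * (100 + 20 * Q)) * (n + 1) = 3 * ((100 + 20 * Q) * (n + 1))" by simp
    have t1: "t \<le> (3 * (100 + 20 * Q)) * (n + 1)" unfolding e using t(1) by linarith
    have t2: "card (used_cells prog (init n mm) t) \<le> (3 * (100 + 20 * Q)) * (n + 1)"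
      unfolding e using t(1) cu by linarith
    show ?thesis
      using t c t1 t2 by (intro exI[of _ t] conjI bexI[of _ "decs 0 n mm"]) (auto simp: bitv_def)
  qed
  show ?thesis by (intro exI[of _ prog] exI[of _ "3 * (100 + 20 * Q)"] allI impI H) simp
qed

end
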